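(* Let $T$ be a monoid, $(X,\cdot)$ an order-preserving left action of $T$ on a semilattice $X$ with identity, and $Y$ a subsemilattice of $X$ with identity satisfying: (A) for all $t\in T$ and $e,f\in Y$ with $e\le f$, $t\cdot f\in Y$ implies $t\cdot e\in Y$; (B) for all $t\in T$ there exists $g\in Y$ with $t\cdot g\in Y$. Let $H^{\mathcal{Q}}=\{te:t\in T,e\in Y,t\cdot e\in Y\}$ and $\mathcal{Q}_\ell(T,X,Y)=\langle H^{\mathcal{Q}}\rangle_{(2)}\subseteq\mathcal{P}_\ell(T,X)$. Then $\mathcal{Q}_\ell(T,X,Y)$ is a subsemigroup of $\mathcal{P}_\ell(T,X)$ closed under $+$ and $*$, is a monoid with identity $1_Y$, is a $*$-left Ehresmann monoid with semilattice of projections $Y$, and $H^{\mathcal{Q}}$ is a proper basis of $\mathcal{Q}_\ell(T,X,Y)$.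
   Context: A semilattice is a commutative semigroup of idempotents, ordered by $e\le f$ iff $ef=e$; $\langle A\rangle_{(2)}$ is the subsemigroup generated by $A$. $\mathcal{P}_\ell(T,X)$: let $T*X$ be the semigroup free product acting on $X$ (elements of $X$ act by multiplication), $\omega^+=\omega\cdot1_X$, $\sim$ the semigroup congruence generated by $\{(\alpha^+\alpha,\alpha)\}\cup\{(1_T,1_X)\}$, and $\mathcal{P}_\ell(T,X)=(T*X)/\sim$ with $[\alpha]^+=[\alpha^+]$; $X$ and $T$ are identified with their injective images $\{[x]\}$, $\{[t]\}$. It is a left Ehresmann monoid with projections $X$ and unique $T$-normal forms $t_0e_1t_1\cdots e_nt_n$ ($n\ge0$, $e_i\in X\setminus\{1\}$, $t_1,\dots,t_{n-1}\in T\setminus\{1\}$, $e_i<(t_ie_{i+1}\cdots e_nt_n)^+$); its operation $*$ is $a^*=e_n$ if $n\ge1$ and $t_n=1$, $a^*=1$ otherwise. A $*$-left Ehresmann monoid is a monoid with unary operations $+,*$ satisfying $x^+x=x$, $(x^+y^+)^+=x^+y^+$, $x^+y^+=y^+x^+$, $(xy)^+=(xy^+)^+$, $xx^*=x$, $(x^* )^*=x^*$, $x^*y^*=y^*x^*$, $(xy^* )^*y^*=(xy^* )^*$, $(x^* )^+=x^*$, $(x^+)^*=x^+$; $E=\{a^+\}=\{a^*\}$; $\sigma$ is the least monoid congruence containing $E\times E$. $H\subseteq M$ is atomic if: (H1) $E\subseteq H$; (H2) $h\in H,e\in E$ imply $he\in H$ and $(he)^*=h^*e$; (H3) if $h\in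 H$, $k\in H\setminus E$, $h^*\ge k^+$ then $hk\in H$ and $(hk)^*=k^*$; (H4) every $m$ is $\sigma$-related to some $h\in H$; (H5) if $h,k,w\in H$, $hk\,\sigma\,w$, $k^*=w^*$, then some $u\in H$ has $u\,\sigma\,h$, $u^*\ge k^+$. $H$ is proper if ($h^*=k^*$ and $h\,\sigma\,k$) iff $h=k$. $h_1\cdots h_n$ is in $H$-canonical form if $h_i^*<h_{i+1}^+$ ($1\le i<n$) and $h_i\notin E$ ($2\le i\le n$); $M$ has $H$-canonical forms if each element has exactly one such expression. A basis is an atomic generating set $H$ for which $M$ has $H$-canonical forms; a proper basis is a basis which is proper. *)

theory Defs
  imports Main
begin

text \<open>A structure is given by a carrier M, a multiplication mul, an identity one,
  and unary operations pl (for +) and st (for *).\<close>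

definition sle :: "('a \<Rightarrow> 'a \<Rightarrow> 'a) \<Rightarrow> 'a \<Rightarrow> 'a \<Rightarrow> bool" where
  "sle mul e f \<longleftrightarrow> mul e f = e"

definition sless :: "('a \<Rightarrow> 'a \<Rightarrow> 'a) \<Rightarrow> 'a \<Rightarrow> 'a \<Rightarrow> bool" where
  "sless mul e f \<longleftrightarrow> sle mul e f \<and> e \<noteq> f"

definition is_monoid :: "'a set \<Rightarrow> ('a \<Rightarrow> 'a \<Rightarrow> 'a) \<Rightarrow> 'a \<Rightarrow> bool" where
  "is_monoid M mul one \<longleftrightarrow>
     one \<in> M \<and> (\<forall>x\<in>M. \<forall>y\<in>M. mul x y \<in> M) \<and>
     (\<forall>x\<in>M. \<forall>y\<in>M. \<forall>z\<in>M. mul (mul x y) z = mul x (mul y z)) \<and>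
     (\<forall>x\<in>M. mul one x = x \<and> mul x one = x)"

definition star_left_ehresmann ::
  "'a set \<Rightarrow> ('a \<Rightarrow> 'a \<Rightarrow> 'a) \<Rightarrow> 'a \<Rightarrow> ('a \<Rightarrow> 'a) \<Rightarrow> ('a \<Rightarrow> 'a) \<Rightarrow> bool" where
  "star_left_ehresmann M mul one pl st \<longleftrightarrow>
     is_monoid M mul one \<and> (\<forall>x\<in>M. pl x \<in> M \<and> st x \<in> M) \<and>
     (\<forall>x\<in>M. mul (pl x) x = x) \<and>
     (\<forall>x\<in>M. \<forall>y\<in>M. pl (mul (pl x) (pl y)) = mul (pl x) (pl y)) \<and>
     (\<forall>x\<in>M. \<forall>y\<in>M. mul (pl x) (pl y) = mul (pl y) (pl x)) \<and>
     (\<forall>x\<in>M. \<forall>y\<in>M. pl (mul x y) = pl (mul x (pl y))) \<and>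
     (\<forall>x\<in>M. mul x (st x) = x) \<and>
     (\<forall>x\<in>M. st (st x) = st x) \<and>
     (\<forall>x\<in>M. \<forall>y\<in>M. mul (st x) (st y) = mul (st y) (st x)) \<and>
     (\<forall>x\<in>M. \<forall>y\<in>M. mul (st (mul x (st y))) (st y) = st (mul x (st y))) \<and>
     (\<forall>x\<in>M. pl (st x) = st x) \<and>
     (\<forall>x\<in>M. st (pl x) = pl x)"

inductive_set sigma_rel :: "'a set \<Rightarrow> ('a \<Rightarrow> 'a \<Rightarrow> 'a) \<Rightarrow> 'a set \<Rightarrow> ('a \<times> 'a) set"
  for M mul E where
  base: "e \<in> E \<Longrightarrow> f \<in> E \<Longrightarrow> (e, f) \<in> sigma_rel M mul E"
| refl: "a \<in> M \<Longrightarrow> (a, a) \<in> sigma_rel M mul E"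
| sym: "(a, b) \<in> sigma_rel M mul E \<Longrightarrow> (b, a) \<in> sigma_rel M mul E"
| trans: "(a, b) \<in> sigma_rel M mul E \<Longrightarrow> (b, c) \<in> sigma_rel M mul E \<Longrightarrow> (a, c) \<in> sigma_rel M mul E"
| left: "(a, b) \<in> sigma_rel M mul E \<Longrightarrow> c \<in> M \<Longrightarrow> (mul c a, mul c b) \<in> sigma_rel M mul E"
| right: "(a, b) \<in> sigma_rel M mul E \<Longrightarrow> c \<in> M \<Longrightarrow> (mul a c, mul b c) \<in> sigma_rel M mul E"

definition sigma :: "'a set \<Rightarrow> ('a \<Rightarrow> 'a \<Rightarrow> 'a) \<Rightarrow> ('a \<Rightarrow> 'a) \<Rightarrow> ('a \<times> 'a) set" where
  "sigma M mul pl = sigma_rel M mul (pl ` M)"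

inductive_set sg_gen :: "('a \<Rightarrow> 'a \<Rightarrow> 'a) \<Rightarrow> 'a set \<Rightarrow> 'a set" for mul A where
  gen: "a \<in> A \<Longrightarrow> a \<in> sg_gen mul A"
| mul: "a \<in> sg_gen mul A \<Longrightarrow> b \<in> sg_gen mul A \<Longrightarrow> mul a b \<in> sg_gen mul A"

definition atomic ::
  "'a set \<Rightarrow> ('a \<Rightarrow> 'a \<Rightarrow> 'a) \<Rightarrow> ('a \<Rightarrow> 'a) \<Rightarrow> ('a \<Rightarrow> 'a) \<Rightarrow> 'a set \<Rightarrow> bool" where
  "atomic M mul pl st H \<longleftrightarrow> H \<subseteq> M \<and>
     \<comment> \<open>H1\<close> pl ` M \<subseteq> H \<and>
     \<comment> \<open>H2\<close> (\<forall>h\<in>H. \<forall>e\<in>pl ` M. mul h e \<in> H \<and> st (mul h e) = mul (st h) e) \<and>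
     \<comment> \<open>H3\<close> (\<forall>h\<in>H. \<forall>k\<in>H - pl ` M. sle mul (pl k) (st h) \<longrightarrow>
                 mul h k \<in> H \<and> st (mul h k) = st k) \<and>
     \<comment> \<open>H4\<close> (\<forall>m\<in>M. \<exists>h\<in>H. (m, h) \<in> sigma M mul pl) \<and>
     \<comment> \<open>H5\<close> (\<forall>h\<in>H. \<forall>k\<in>H. \<forall>w\<in>H. (mul h k, w) \<in> sigma M mul pl \<and> st k = st w \<longrightarrow>
                 (\<exists>u\<in>H. (u, h) \<in> sigma M mul pl \<and> sle mul (pl k) (st u)))"

definition proper ::
  "'a set \<Rightarrow> ('a \<Rightarrow> 'a \<Rightarrow> 'a) \<Rightarrow> ('a \<Rightarrow> 'a) \<Rightarrow> ('a \<Rightarrow> 'a) \<Rightarrow> 'a set \<Rightarrow> bool" where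
  "proper M mul pl st H \<longleftrightarrow>
     (\<forall>h\<in>H. \<forall>k\<in>H. (st h = st k \<and> (h, k) \<in> sigma M mul pl) \<longleftrightarrow> h = k)"

definition lprod :: "('a \<Rightarrow> 'a \<Rightarrow> 'a) \<Rightarrow> 'a list \<Rightarrow> 'a" where
  "lprod mul hs = foldr mul (butlast hs) (last hs)"

definition canonical_form ::
  "'a set \<Rightarrow> ('a \<Rightarrow> 'a \<Rightarrow> 'a) \<Rightarrow> ('a \<Rightarrow> 'a) \<Rightarrow> ('a \<Rightarrow> 'a) \<Rightarrow> 'a set \<Rightarrow> 'a list \<Rightarrow> bool" where
  "canonical_form M mul pl st H hs \<longleftrightarrow> hs \<noteq> [] \<and> set hs \<subseteq> H \<and>
     (\<forall>i. Suc i < length hs \<longrightarrow> sless mul (st (hs ! i)) (pl (hs ! Suc i))) \<and>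
     (\<forall>i. 0 < i \<and> i < length hs \<longrightarrow> hs ! i \<notin> pl ` M)"

definition has_canonical_forms ::
  "'a set \<Rightarrow> ('a \<Rightarrow> 'a \<Rightarrow> 'a) \<Rightarrow> ('a \<Rightarrow> 'a) \<Rightarrow> ('a \<Rightarrow> 'a) \<Rightarrow> 'a set \<Rightarrow> bool" where
  "has_canonical_forms M mul pl st H \<longleftrightarrow>
     (\<forall>m\<in>M. \<exists>!hs. canonical_form M mul pl st H hs \<and> lprod mul hs = m)"

definition basis ::
  "'a set \<Rightarrow> ('a \<Rightarrow> 'a \<Rightarrow> 'a) \<Rightarrow> ('a \<Rightarrow> 'a) \<Rightarrow> ('a \<Rightarrow> 'a) \<Rightarrow> 'a set \<Rightarrow> bool" where
  "basis M mul pl st H \<longleftrightarrow> atomic M mul pl st H \<and> sg_gen mul H = M \<and>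
     has_canonical_forms M mul pl st H"

definition proper_basis ::
  "'a set \<Rightarrow> ('a \<Rightarrow> 'a \<Rightarrow> 'a) \<Rightarrow> ('a \<Rightarrow> 'a) \<Rightarrow> ('a \<Rightarrow> 'a) \<Rightarrow> 'a set \<Rightarrow> bool" where
  "proper_basis M mul pl st H \<longleftrightarrow> basis M mul pl st H \<and> proper M mul pl st H"

text \<open>T is the monoid type 't, X the semilattice-with-identity type 'x (a commutative
  idempotent monoid), act the left action. Elements of the semigroup free product T*X
  are represented by nonempty words over T + X.\<close>

type_synonym ('t, 'x) pword = "('t + 'x) list"

fun act_word :: "('t \<Rightarrow> 'x \<Rightarrow> 'x) \<Rightarrow> ('t, 'x::comm_monoid_mult) pword \<Rightarrow> 'x \<Rightarrow> 'x" where
  "act_word act [] y = y"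
| "act_word act (Inl t # w) y = act t (act_word act w y)"
| "act_word act (Inr e # w) y = e * act_word act w y"

text \<open>Generating pairs: the free product relations, (alpha^+ alpha, alpha), (1_T, 1_X).\<close>
inductive Pgen :: "('t::monoid_mult \<Rightarrow> 'x \<Rightarrow> 'x) \<Rightarrow> ('t, 'x::comm_monoid_mult) pword \<Rightarrow> ('t, 'x) pword \<Rightarrow> bool"
  for act where
  Tmul: "Pgen act [Inl s, Inl t] [Inl (s * t)]"
| Xmul: "Pgen act [Inr e, Inr f] [Inr (e * f)]"
| plus: "w \<noteq> [] \<Longrightarrow> Pgen act (Inr (act_word act w 1) # w) w"
| one: "Pgen act [Inl 1] [Inr 1]"

inductive Pcong :: "('t::monoid_mult \<Rightarrow> 'x \<Rightarrow> 'x) \<Rightarrow> ('t, 'x::comm_monoid_mult) pword \<Rightarrow> ('t, 'x) pword \<Rightarrow> bool"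
  for act where
  gen: "Pgen act u v \<Longrightarrow> Pcong act u v"
| refl: "w \<noteq> [] \<Longrightarrow> Pcong act w w"
| sym: "Pcong act u v \<Longrightarrow> Pcong act v u"
| trans: "Pcong act u v \<Longrightarrow> Pcong act v w \<Longrightarrow> Pcong act u w"
| ctxt: "Pcong act u v \<Longrightarrow> Pcong act (p @ u @ q) (p @ v @ q)"

definition pclass :: "('t::monoid_mult \<Rightarrow> 'x \<Rightarrow> 'x) \<Rightarrow> ('t, 'x::comm_monoid_mult) pword \<Rightarrow> ('t, 'x) pword set" where
  "pclass act w = {v. Pcong act w v}"

definition Pl :: "('t::monoid_mult \<Rightarrow> 'x \<Rightarrow> 'x) \<Rightarrow> ('t, 'x::comm_monoid_mult) pword set set" where
  "Pl act = {pclass act w | w. w \<noteq> []}"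

definition pmul :: "('t::monoid_mult \<Rightarrow> 'x \<Rightarrow> 'x) \<Rightarrow> ('t, 'x::comm_monoid_mult) pword set \<Rightarrow> ('t, 'x) pword set \<Rightarrow> ('t, 'x) pword set" where
  "pmul act A B = {w. \<exists>a\<in>A. \<exists>b\<in>B. Pcong act (a @ b) w}"

definition pplus :: "('t::monoid_mult \<Rightarrow> 'x \<Rightarrow> 'x) \<Rightarrow> ('t, 'x::comm_monoid_mult) pword set \<Rightarrow> ('t, 'x) pword set" where
  "pplus act A = {w. \<exists>a\<in>A. Pcong act [Inr (act_word act a 1)] w}"

definition embX :: "('t::monoid_mult \<Rightarrow> 'x \<Rightarrow> 'x) \<Rightarrow> 'x::comm_monoid_mult \<Rightarrow> ('t, 'x) pword set" where
  "embX act e = pclass act [Inr e]"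

definition embT :: "('t::monoid_mult \<Rightarrow> 'x \<Rightarrow> 'x) \<Rightarrow> 't \<Rightarrow> ('t, 'x::comm_monoid_mult) pword set" where
  "embT act t = pclass act [Inl t]"

text \<open>T-normal forms t0 e1 t1 ... en tn, given as t0 and the list [(e1,t1),...,(en,tn)].\<close>
definition nf_word :: "'t \<Rightarrow> ('x \<times> 't) list \<Rightarrow> ('t, 'x) pword" where
  "nf_word t0 ps = Inl t0 # concat (map (\<lambda>(e, t). [Inr e, Inl t]) ps)"

definition isNF :: "('t::monoid_mult \<Rightarrow> 'x \<Rightarrow> 'x) \<Rightarrow> 't \<Rightarrow> ('x::comm_monoid_mult \<times> 't) list \<Rightarrow> bool" where
  "isNF act t0 ps \<longleftrightarrow>
     (\<forall>i < length ps. fst (ps ! i) \<noteq> 1) \<and>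
     (\<forall>i. Suc i < length ps \<longrightarrow> snd (ps ! i) \<noteq> 1) \<and>
     (\<forall>i < length ps. sless (*) (fst (ps ! i))
        (act_word act (Inl (snd (ps ! i)) # concat (map (\<lambda>(e, t). [Inr e, Inl t]) (drop (Suc i) ps))) 1))"

definition pstar :: "('t::monoid_mult \<Rightarrow> 'x \<Rightarrow> 'x) \<Rightarrow> ('t, 'x::comm_monoid_mult) pword set \<Rightarrow> ('t, 'x) pword set" where
  "pstar act a = embX act (THE e. \<exists>t0 ps. isNF act t0 ps \<and> pclass act (nf_word t0 ps) = a \<and>
       e = (if ps \<noteq> [] \<and> snd (last ps) = 1 then fst (last ps) else 1))"

definition HQ :: "('t::monoid_mult \<Rightarrow> 'x \<Rightarrow> 'x) \<Rightarrow> 'x::comm_monoid_mult set \<Rightarrow> ('t, 'x) pword set set" where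
  "HQ act Y = {pmul act (embT act t) (embX act e) | t e. e \<in> Y \<and> act t e \<in> Y}"

definition Ql :: "('t::monoid_mult \<Rightarrow> 'x \<Rightarrow> 'x) \<Rightarrow> 'x::comm_monoid_mult set \<Rightarrow> ('t, 'x) pword set set" where
  "Ql act Y = sg_gen (pmul act) (HQ act Y)"

end

theory Submission
  imports Defs
begin


fun pfun :: "('t::monoid_mult \<Rightarrow> 'x::comm_monoid_mult \<Rightarrow> 'x) \<Rightarrow> 't \<Rightarrow> ('x \<times> 't) list \<Rightarrow> 'x" where
  "pfun act t0 [] = act t0 1"
| "pfun act t0 ((e, t) # ps) = act t0 (e * pfun act t ps)"

fun la :: "('t::monoid_mult \<Rightarrow> 'x::comm_monoid_mult \<Rightarrow> 'x) \<Rightarrow> ('t + 'x) \<Rightarrow> 't \<times> ('x \<times> 't) list \<Rightarrow> 't \<times> ('x \<times> 't) list" where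
  "la act (Inl s) (t0, ps) = (s * t0, ps)"
| "la act (Inr e) (t0, ps) =
    (if e * pfun act t0 ps = pfun act t0 ps then (t0, ps)
     else if t0 = 1 \<and> ps \<noteq> [] then (1, (e * pfun act t0 ps, snd (hd ps)) # tl ps)
     else (1, (e * pfun act t0 ps, t0) # ps))"

definition nfo :: "('t::monoid_mult \<Rightarrow> 'x::comm_monoid_mult \<Rightarrow> 'x) \<Rightarrow> ('t, 'x) pword \<Rightarrow> 't \<times> ('x \<times> 't) list" where
  "nfo act w = foldr (la act) w (1, [])"

definition pfN :: "('t::monoid_mult \<Rightarrow> 'x::comm_monoid_mult \<Rightarrow> 'x) \<Rightarrow> 't \<times> ('x \<times> 't) list \<Rightarrow> 'x" where
  "pfN act N = pfun act (fst N) (snd N)"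

definition nfw :: "'t \<times> ('x \<times> 't) list \<Rightarrow> ('t, 'x) pword" where
  "nfw N = nf_word (fst N) (snd N)"

fun nfp :: "('t::monoid_mult \<Rightarrow> 'x::comm_monoid_mult \<Rightarrow> 'x) \<Rightarrow> ('x \<times> 't) list \<Rightarrow> bool" where
  "nfp act [] = True"
| "nfp act ((e, t) # ps) = (e \<noteq> 1 \<and> (ps \<noteq> [] \<longrightarrow> t \<noteq> 1) \<and> sless (*) e (pfun act t ps) \<and> nfp act ps)"

definition starNF :: "'t::monoid_mult \<times> ('x::comm_monoid_mult \<times> 't) list \<Rightarrow> 'x" where
  "starNF N = (if snd N \<noteq> [] \<and> snd (last (snd N)) = 1 then fst (last (snd N)) else 1)"

fun projw :: "('t::monoid_mult, 'x) pword \<Rightarrow> 't" where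
  "projw [] = 1"
| "projw (Inl t # w) = t * projw w"
| "projw (Inr e # w) = projw w"

declare Pcong.trans[trans]

lemma nf_word_Cons: "nf_word t0 ((e, t) # ps) = Inl t0 # Inr e # nf_word t ps"
  by (simp add: nf_word_def)

lemma nf_word_Nil: "nf_word t0 [] = [Inl t0]"
  by (simp add: nf_word_def)

lemma nf_word_ne: "nf_word t0 ps \<noteq> []"
  by (simp add: nf_word_def)

lemma act_word_append: "act_word act (u @ v) x = act_word act u (act_word act v x)"
proof (induction u)
  case (Cons a u) then show ?case by (cases a) auto
qed simp

lemma act_word_nf: "act_word act (nf_word t ps) 1 = pfun act t ps"
  by (induction ps arbitrary: t) (auto simp: nf_word_Cons nf_word_Nil)

lemma projw_append: "projw (u @ v) = projw u * projw v"
proof (induction u)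
  case (Cons a u) then show ?case by (cases a) (auto simp: mult.assoc)
qed simp

lemma Pcong_ne: "Pcong act u v \<Longrightarrow> u \<noteq> [] \<and> v \<noteq> []"
  by (induction rule: Pcong.induct) (auto elim: Pgen.cases)

lemma Pcong_app: "Pcong act u v \<Longrightarrow> Pcong act (u @ q) (v @ q)"
  using Pcong.ctxt[of act u v "[]" q] by simp

lemma Pcong_pre: "Pcong act u v \<Longrightarrow> Pcong act (p @ u) (p @ v)"
  using Pcong.ctxt[of act u v p "[]"] by simp

lemma Pcong_Cons: "Pcong act u v \<Longrightarrow> Pcong act (a # u) (a # v)"
  using Pcong_pre[of act u v "[a]"] by simp

lemma W1: "Pcong act (Inr a # Inr b # Z) (Inr (a * b) # Z)"
  using Pcong_app[OF Pcong.gen[OF Pgen.Xmul], of act a b Z] by simp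

lemma W2: "Pcong act (Inl a # Inl b # Z) (Inl (a * b) # Z)"
  using Pcong_app[OF Pcong.gen[OF Pgen.Tmul], of act a b Z] by simp

lemma W3: "W \<noteq> [] \<Longrightarrow> Pcong act (Inr (act_word act W 1) # W) W"
  by (rule Pcong.gen[OF Pgen.plus])

lemma W4: "Pcong act (Inl 1 # Z) (Inr 1 # Z)"
  using Pcong_app[OF Pcong.gen[OF Pgen.one], of act Z] by simp

lemma W5: "Z \<noteq> [] \<Longrightarrow> Pcong act (Inr 1 # Z) Z"
proof -
  assume Z: "Z \<noteq> []"
  have "Pcong act (Inr 1 # Z) (Inr 1 # Inr (act_word act Z 1) # Z)"
    by (rule Pcong_Cons[OF Pcong.sym[OF W3[OF Z]]])
  also have "Pcong act \<dots> (Inr (act_word act Z 1) # Z)" using W1[of act 1 _ Z] by simp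
  also have "Pcong act \<dots> Z" by (rule W3[OF Z])
  finally show ?thesis .
qed

lemma W6: "Pcong act (Inr e # Z) (Inl 1 # Inr e # Z)"
proof -
  have "Pcong act (Inr e # Z) (Inr 1 # Inr e # Z)" using Pcong.sym[OF W1[of act 1 e Z]] by simp
  also have "Pcong act \<dots> (Inl 1 # Inr e # Z)" by (rule Pcong.sym[OF W4])
  finally show ?thesis .
qed

lemma W7: "Pcong act (Inr a # Inl 1 # Z) (Inl 1 # Inr a # Z)"
proof -
  have "Pcong act (Inr a # Inl 1 # Z) (Inr a # Inr 1 # Z)" by (rule Pcong_Cons[OF W4])
  also have "Pcong act \<dots> (Inr a # Z)" using W1[of act a 1 Z] by simp
  also have "Pcong act \<dots> (Inl 1 # Inr a # Z)" by (rule W6)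
  finally show ?thesis .
qed

lemma pclass_eqI: "Pcong act u v \<Longrightarrow> pclass act u = pclass act v"
  unfolding pclass_def by (auto intro: Pcong.trans Pcong.sym)

lemma pclass_mem: "u \<noteq> [] \<Longrightarrow> u \<in> pclass act u"
  unfolding pclass_def by (auto intro: Pcong.refl)

lemma pmul_pclass: "u \<noteq> [] \<Longrightarrow> v \<noteq> [] \<Longrightarrow> pmul act (pclass act u) (pclass act v) = pclass act (u @ v)"
  unfolding pmul_def pclass_def
proof (auto)
  fix a b w assume "Pcong act u a" "Pcong act v b" "Pcong act (a @ b) w"
  have "Pcong act (u @ v) (a @ v)" by (rule Pcong_app) fact
  also have "Pcong act \<dots> (a @ b)" by (rule Pcong_pre) fact
  finally show "Pcong act (u @ v) w" using \<open>Pcong act (a @ b) w\<close> by (rule Pcong.trans)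
next
  fix w assume "u \<noteq> []" "v \<noteq> []" "Pcong act (u @ v) w"
  then show "\<exists>a. Pcong act u a \<and> (\<exists>b. Pcong act v b \<and> Pcong act (a @ b) w)"
    by (auto intro: Pcong.refl)
qed




locale nfl =
  fixes act :: "'t::monoid_mult \<Rightarrow> 'x::comm_monoid_mult \<Rightarrow> 'x"
  assumes idem: "\<And>e::'x. e * e = e"
    and act_one: "\<And>x. act 1 x = x"
    and act_mult: "\<And>s t x. act (s * t) x = act s (act t x)"
    and act_mono: "\<And>t e f. e * f = e \<Longrightarrow> act t e * act t f = act t e"
begin

lemma idem_left: "(a::'x) * (a * b) = a * b"
  by (metis idem mult.assoc)

lemmas xs = idem idem_left mult.assoc mult.commute mult.left_commute

lemma act_word_mono: "x * y = x \<Longrightarrow> act_word act w x * act_word act w y = act_word act w x"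
proof (induction w)
  case (Cons a w) then show ?case
    by (cases a) (auto intro: act_mono simp: xs)
qed simp

lemma pfun_mult: "pfun act (s * t0) ps = act s (pfun act t0 ps)"
  by (cases ps) (auto simp: act_mult)

lemma nfo_Cons[simp]: "nfo act (a # q) = la act a (nfo act q)"
  by (simp add: nfo_def)

lemma nfo_Nil[simp]: "nfo act [] = (1, [])"
  by (simp add: nfo_def)

lemma pfN_la: "pfN act (la act a N) = act_word act [a] (pfN act N)"
proof (cases N)
  case (Pair t0 ps)
  show ?thesis
  proof (cases a)
    case (Inl s) then show ?thesis using Pair by (simp add: pfN_def pfun_mult)
  next
    case (Inr e)
    show ?thesis
    proof (cases "t0 = 1 \<and> ps \<noteq> []")
      case True
      then obtain e1 t1 ps' where "ps = (e1, t1) # ps'" "t0 = 1" by (cases ps) auto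
      then show ?thesis using Pair Inr by (simp add: pfN_def act_one xs)
    next
      case False
      then show ?thesis using Pair Inr by (auto simp add: pfN_def act_one xs)
    qed
  qed
qed

lemma act_word_nfo: "act_word act w 1 = pfN act (nfo act w)"
proof (induction w)
  case Nil then show ?case by (simp add: nfo_def pfN_def act_one)
next
  case (Cons a w)
  have "act_word act (a # w) 1 = act_word act [a] (act_word act w 1)"
    using act_word_append[of act "[a]" w 1] by simp
  then show ?case using Cons by (simp add: nfo_def pfN_la)
qed

lemma la_Inr_eq: "la act (Inr e) N = la act (Inr (e * pfN act N)) N"
  by (cases N) (simp add: pfN_def xs)

definition lx :: "'t \<times> ('x \<times> 't) list \<Rightarrow> 't" where
  "lx N = (if fst N = 1 \<and> snd N \<noteq> [] then snd (hd (snd N)) else fst N)"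
definition lr :: "'t \<times> ('x \<times> 't) list \<Rightarrow> ('x \<times> 't) list" where
  "lr N = (if fst N = 1 \<and> snd N \<noteq> [] then tl (snd N) else snd N)"

lemma la_Inr_unch: "e * pfN act N = pfN act N \<Longrightarrow> la act (Inr e) N = N"
  by (cases N) (simp add: pfN_def)

lemma la_Inr_ch: "e * pfN act N \<noteq> pfN act N \<Longrightarrow> la act (Inr e) N = (1, (e * pfN act N, lx N) # lr N)"
  by (cases N) (simp add: pfN_def lx_def lr_def)

lemma lx_lr: "lx (1, (a, x) # r) = x" "lr (1, (a, x) # r) = r"
  by (simp_all add: lx_def lr_def)

lemma la_Inr_Inr: "la act (Inr e) (la act (Inr f) N) = la act (Inr (e * f)) N"
proof -
  define g where "g = pfN act N"
  have pf: "pfN act (la act (Inr f) N) = f * g" using pfN_la[of "Inr f" N] by (simp add: g_def)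
  show ?thesis
  proof (cases "f * g = g")
    case True
    then have "la act (Inr f) N = N" by (simp add: g_def la_Inr_unch)
    moreover have "la act (Inr (e * f)) N = la act (Inr (e * f * g)) N" by (simp add: la_Inr_eq[of "e * f"] g_def)
    moreover have "e * f * g = e * g" using True by (simp add: mult.assoc)
    ultimately show ?thesis by (simp add: la_Inr_eq[of e N] g_def)
  next
    case False
    have L1: "la act (Inr f) N = (1, (f * g, lx N) # lr N)" using False by (simp add: g_def la_Inr_ch)
    show ?thesis
    proof (cases "e * f * g = f * g")
      case True
      have "e * (f * g) = f * g" using True by (simp add: mult.assoc)
      then have "la act (Inr e) (la act (Inr f) N) = la act (Inr f) N"
        using pf by (intro la_Inr_unch) simp
      moreover have "e * f * g \<noteq> g" using True False by simp
      then have "la act (Inr (e * f)) N = (1, (f * g, lx N) # lr N)"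
        using True by (subst la_Inr_ch) (simp_all add: g_def)
      ultimately show ?thesis using L1 by simp
    next
      case False2: False
      have ne: "e * f * g \<noteq> g"
      proof
        assume "e * f * g = g"
        then have "f * g = f * (e * f * g)" by simp
        also have "\<dots> = e * f * g" by (simp add: xs)
        finally show False using False2 \<open>e * f * g = g\<close> False by simp
      qed
      have "e * (f * g) \<noteq> f * g" using False2 by (simp add: mult.assoc)
      then have "la act (Inr e) (la act (Inr f) N) = (1, (e * (f * g), lx N) # lr N)"
        using pf L1 by (subst la_Inr_ch) (simp_all add: lx_lr)
      moreover have "la act (Inr (e * f)) N = (1, (e * f * g, lx N) # lr N)"
        using ne by (subst la_Inr_ch) (simp_all add: g_def)
      ultimately show ?thesis by (simp add: mult.assoc)
    qed
  qed
qed

lemma nfo_append: "nfo act (u @ q) = foldr (la act) u (nfo act q)"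
  by (simp add: nfo_def)

lemma Pgen_nfo: "Pgen act u v \<Longrightarrow> nfo act (u @ q) = nfo act (v @ q)"
proof (induction rule: Pgen.induct)
  case (Tmul s t) then show ?case by (cases "nfo act q") (simp add: nfo_append mult.assoc)
next
  case (Xmul e f) then show ?case by (simp add: nfo_append la_Inr_Inr)
next
  case (plus w)
  define N where "N = nfo act (w @ q)"
  have "pfN act N = act_word act w (act_word act q 1)"
    by (simp add: N_def act_word_nfo[symmetric] act_word_append)
  then have "act_word act w 1 * pfN act N = pfN act N"
    using act_word_mono[of "act_word act q 1" 1 w] by (simp add: mult.commute)
  then have "la act (Inr (act_word act w 1)) N = N" by (cases N) (simp add: pfN_def)
  then show ?case by (simp add: N_def nfo_append)
next
  case one then show ?case by (cases "nfo act q") (simp add: nfo_append)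
qed

lemma Pcong_nfo: "Pcong act u v \<Longrightarrow> nfo act (u @ q) = nfo act (v @ q)"
proof (induction arbitrary: q rule: Pcong.induct)
  case (gen u v) then show ?case by (rule Pgen_nfo)
next
  case (ctxt u v p q')
  then show ?case by (simp add: nfo_append[of p])
qed auto

lemma Pcong_step: "Pcong act (a # nfw N) (nfw (la act a N))"
proof -
  obtain t0 ps where N: "N = (t0, ps)" by (cases N)
  define W where "W = nf_word t0 ps"
  have W: "W \<noteq> []" "act_word act W 1 = pfun act t0 ps" by (simp_all add: W_def nf_word_ne act_word_nf)
  define f where "f = pfun act t0 ps"
  show ?thesis
  proof (cases a)
    case (Inl s)
    then show ?thesis using N W2[of act s t0] by (simp add: nfw_def nf_word_def)
  next
    case (Inr e)
    have A: "Pcong act (Inr e # W) (Inr (e * f) # W)"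
    proof -
      have "Pcong act (Inr e # Inr (act_word act W 1) # W) (Inr e # W)"
        by (rule Pcong_Cons[OF W3[OF W(1)]])
      then have "Pcong act (Inr e # W) (Inr e # Inr f # W)"
        using W(2) by (simp add: f_def Pcong.sym)
      also have "Pcong act \<dots> (Inr (e * f) # W)" by (rule W1)
      finally show ?thesis .
    qed
    show ?thesis
    proof (cases "e * f = f")
      case True
      then have "Pcong act (Inr e # W) W" using A W3[OF W(1)] W(2) by (simp add: f_def) (metis Pcong.trans)
      then show ?thesis using True N Inr by (simp add: nfw_def W_def f_def)
    next
      case False
      show ?thesis
      proof (cases "t0 = 1 \<and> ps \<noteq> []")
        case True
        then obtain e1 t1 ps' where ps: "ps = (e1, t1) # ps'" and t0: "t0 = 1" by (cases ps) auto
        define R where "R = nf_word t1 ps'"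
        have WR: "W = Inl 1 # Inr e1 # R" using ps t0 by (simp add: W_def R_def nf_word_Cons)
        have fe: "f = e1 * pfun act t1 ps'" using ps t0 by (simp add: f_def act_one)
        have "Pcong act (Inr (e * f) # W) (Inl 1 # Inr (e * f) # Inr e1 # R)" using WR W7 by simp
        also have "Pcong act \<dots> (Inl 1 # Inr (e * f * e1) # R)" by (rule Pcong_Cons[OF W1])
        also have "e * f * e1 = e * f" using fe by (simp add: xs)
        finally have "Pcong act (Inr e # W) (Inl 1 # Inr (e * f) # R)" using A by (rule Pcong.trans[rotated])
        then show ?thesis using False N Inr ps t0 by (simp add: nfw_def W_def f_def R_def nf_word_Cons)
      next
        case False2: False
        have "Pcong act (Inr e # W) (Inl 1 # Inr (e * f) # W)" using A W6 by (rule Pcong.trans)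
        then show ?thesis using False False2 N Inr by (auto simp add: nfw_def W_def f_def nf_word_Cons)
      qed
    qed
  qed
qed

lemma Pcong_nfw: "w \<noteq> [] \<Longrightarrow> Pcong act w (nfw (nfo act w))"
proof (induction w)
  case Nil then show ?case by simp
next
  case (Cons a w)
  show ?case
  proof (cases "w = []")
    case True
    have "Pcong act [a] (a # nfw (1, []))"
    proof (cases a)
      case (Inl s) then show ?thesis using Pcong.sym[OF W2[of act s 1 "[]"]] by (simp add: nfw_def nf_word_Nil)
    next
      case (Inr e)
      have "Pcong act [Inr e] [Inr e, Inr 1]" using Pcong.sym[OF W1[of act e 1 "[]"]] by simp
      also have "Pcong act \<dots> [Inr e, Inl 1]" by (rule Pcong_Cons[OF Pcong.sym[OF W4[of act "[]"]]])
      finally show ?thesis using Inr by (simp add: nfw_def nf_word_Nil)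
    qed
    also have "Pcong act \<dots> (nfw (la act a (1, [])))" by (rule Pcong_step)
    finally show ?thesis using True by (simp add: nfo_def)
  next
    case False
    have "Pcong act (a # w) (a # nfw (nfo act w))" using Cons False by (simp add: Pcong_Cons)
    also have "Pcong act \<dots> (nfw (la act a (nfo act w)))" by (rule Pcong_step)
    finally show ?thesis by (simp add: nfo_def)
  qed
qed

lemma Pcong_iff: "u \<noteq> [] \<Longrightarrow> v \<noteq> [] \<Longrightarrow> Pcong act u v \<longleftrightarrow> nfo act u = nfo act v"
proof
  assume "Pcong act u v" then show "nfo act u = nfo act v" using Pcong_nfo[of u v "[]"] by simp
next
  assume "u \<noteq> []" "v \<noteq> []" "nfo act u = nfo act v"
  then show "Pcong act u v" using Pcong_nfw[of u] Pcong_nfw[of v] by (metis Pcong.sym Pcong.trans)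
qed

lemma pclass_eq_iff: "u \<noteq> [] \<Longrightarrow> v \<noteq> [] \<Longrightarrow> pclass act u = pclass act v \<longleftrightarrow> nfo act u = nfo act v"
proof
  assume "u \<noteq> []" "v \<noteq> []" "pclass act u = pclass act v"
  then have "v \<in> pclass act u" using pclass_mem by metis
  then show "nfo act u = nfo act v" using Pcong_iff \<open>u \<noteq> []\<close> \<open>v \<noteq> []\<close> by (simp add: pclass_def)
qed (simp add: Pcong_iff pclass_eqI)

end



definition projC :: "('t::monoid_mult, 'x) pword set \<Rightarrow> 't" where
  "projC a = projw (SOME w. w \<in> a)"

lemma Pcong_projw: "Pcong act u v \<Longrightarrow> projw u = projw v"
proof (induction rule: Pcong.induct)
  case (gen u v) then show ?case by (induction rule: Pgen.induct) (auto simp: mult.assoc)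
next
  case (ctxt u v p q) then show ?case by (simp add: projw_append)
qed auto

lemma projC_pclass: "u \<noteq> [] \<Longrightarrow> projC (pclass act u) = projw u"
proof -
  assume u: "u \<noteq> []"
  then have "\<exists>w. w \<in> pclass act u" using pclass_mem by blast
  then have "(SOME w. w \<in> pclass act u) \<in> pclass act u" by (rule someI_ex)
  then show ?thesis unfolding projC_def pclass_def using Pcong_projw by fastforce
qed

context nfl
begin

lemma nfp_la: "nfp act (snd N) \<Longrightarrow> nfp act (snd (la act a N))"
proof (cases a)
  case (Inl s) then show "nfp act (snd N) \<Longrightarrow> ?thesis" by (cases N) simp
next
  case (Inr e)
  assume nf: "nfp act (snd N)"
  define f where "f = pfN act N"
  show ?thesis
  proof (cases "e * f = f")
    case True then show ?thesis using nf Inr by (simp add: la_Inr_unch f_def)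
  next
    case False
    then have L: "la act a N = (1, (e * f, lx N) # lr N)" using Inr by (simp add: la_Inr_ch f_def)
    show ?thesis
    proof (cases "fst N = 1 \<and> snd N \<noteq> []")
      case True
      then obtain e1 t1 ps' where N: "N = (1, (e1, t1) # ps')" by (cases N; cases "snd N") auto
      define p where "p = pfun act t1 ps'"
      have nf1: "e1 \<noteq> 1" "ps' \<noteq> [] \<longrightarrow> t1 \<noteq> 1" "e1 * p = e1" "e1 \<noteq> p" "nfp act ps'"
        using nf by (simp_all add: N p_def sless_def sle_def)
      have fe: "f = e1" using nf1 by (simp add: f_def pfN_def N act_one p_def)
      have ee: "e * e1 \<noteq> e1" using False fe by simp
      have a1: "e * e1 \<noteq> 1"
      proof
        assume "e * e1 = 1"
        then have "e1 = e1 * (e * e1)" by simp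
        also have "\<dots> = e * e1" by (simp add: xs)
        finally show False using ee by simp
      qed
      have a2: "e * e1 \<noteq> p"
      proof
        assume h: "e * e1 = p"
        have "e1 = e1 * p" using nf1 by simp
        also have "\<dots> = e * e1" using h[symmetric] by (simp add: xs)
        finally show False using ee by simp
      qed
      have a3: "e * e1 * p = e * e1" using nf1 by (simp add: mult.assoc)
      show ?thesis using L N fe nf1 a1 a2 a3
        by (simp add: lx_def lr_def sless_def sle_def p_def)
    next
      case False2: False
      have lxr: "lx N = fst N" "lr N = snd N" using False2 by (cases "fst N = 1"; auto simp: lx_def lr_def)+
      have a1: "e * f \<noteq> 1"
      proof
        assume "e * f = 1"
        then have "f = f * (e * f)" by simp
        also have "\<dots> = e * f" by (simp add: xs)
        finally show False using False by simp
      qed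
      have "sless (*) (e * f) (pfun act (fst N) (snd N))"
        using False by (simp add: sless_def sle_def f_def[symmetric, unfolded pfN_def] xs pfN_def)
      moreover have "snd N \<noteq> [] \<longrightarrow> fst N \<noteq> 1" using False2 by blast
      ultimately show ?thesis using L lxr a1 nf by (simp add: f_def pfN_def)
    qed
  qed
qed

lemma nfp_nfo: "nfp act (snd (nfo act w))"
  by (induction w) (simp_all add: nfp_la)

lemma nfo_nf_word: "nfp act ps \<Longrightarrow> nfo act (nf_word t0 ps) = (t0, ps)"
proof (induction ps arbitrary: t0)
  case Nil then show ?case by (simp add: nf_word_Nil)
next
  case (Cons p ps)
  obtain e t where p: "p = (e, t)" by (cases p)
  have h: "e \<noteq> 1" "ps \<noteq> [] \<longrightarrow> t \<noteq> 1" "e * pfun act t ps = e" "e \<noteq> pfun act t ps" "nfp act ps"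
    using Cons.prems p by (simp_all add: sless_def sle_def)
  have "la act (Inr e) (t, ps) = (1, (e, t) # ps)"
    using h by (subst la_Inr_ch) (auto simp: pfN_def lx_def lr_def)
  then show ?case using Cons.IH[OF h(5)] p by (simp add: nf_word_Cons)
qed

lemma all_less_Cons: "(\<forall>i<length (x # xs). P i) \<longleftrightarrow> P 0 \<and> (\<forall>i<length xs. P (Suc i))"
  by (simp add: All_less_Suc2)

lemma all_Suc_less_Cons: "(\<forall>i. Suc i < length (x # xs) \<longrightarrow> P i) \<longleftrightarrow> (xs \<noteq> [] \<longrightarrow> P 0) \<and> (\<forall>i. Suc i < length xs \<longrightarrow> P (Suc i))"
  apply (cases xs)
   apply simp
  apply (auto simp: less_Suc_eq_0_disj)
  done

lemma act_word_nf': "act_word act (Inl t # concat (map (\<lambda>(e, t). [Inr e, Inl t]) ps)) 1 = pfun act t ps"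
  using act_word_nf[of act t ps] by (simp add: nf_word_def)

lemma isNF_iff: "isNF act t0 ps \<longleftrightarrow> nfp act ps"
proof (induction ps arbitrary: t0)
  case Nil then show ?case by (simp add: isNF_def)
next
  case (Cons p ps)
  obtain e t where p: "p = (e, t)" by (cases p)
  have "isNF act t0 (p # ps) \<longleftrightarrow> (e \<noteq> 1 \<and> (ps \<noteq> [] \<longrightarrow> t \<noteq> 1) \<and> sless (*) e (pfun act t ps)) \<and> isNF act t ps"
    unfolding isNF_def all_less_Cons all_Suc_less_Cons using p
    by (auto simp: act_word_nf' simp del: act_word.simps)
  then show ?case using Cons.IH p by simp
qed

lemma pstar_pclass: "u \<noteq> [] \<Longrightarrow> pstar act (pclass act u) = embX act (starNF (nfo act u))"
proof -
  assume u: "u \<noteq> []"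
  obtain t0 ps where N: "nfo act u = (t0, ps)" by (cases "nfo act u")
  have cl: "pclass act (nf_word t0 ps) = pclass act u"
    using Pcong_nfw[OF u] N by (simp add: nfw_def pclass_eqI Pcong.sym)
  have nf: "isNF act t0 ps" using nfp_nfo[of u] N by (simp add: isNF_iff)
  have "(THE e. \<exists>t0 ps. isNF act t0 ps \<and> pclass act (nf_word t0 ps) = pclass act u \<and>
       e = (if ps \<noteq> [] \<and> snd (last ps) = 1 then fst (last ps) else 1)) = starNF (nfo act u)"
  proof (rule the_equality)
    show "\<exists>t0 ps. isNF act t0 ps \<and> pclass act (nf_word t0 ps) = pclass act u \<and>
       starNF (nfo act u) = (if ps \<noteq> [] \<and> snd (last ps) = 1 then fst (last ps) else 1)"
      using cl nf N unfolding starNF_def by (intro exI[of _ t0] exI[of _ ps]) simp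
  next
    fix e assume "\<exists>t0 ps. isNF act t0 ps \<and> pclass act (nf_word t0 ps) = pclass act u \<and>
       e = (if ps \<noteq> [] \<and> snd (last ps) = 1 then fst (last ps) else 1)"
    then obtain t1 ps1 where h: "isNF act t1 ps1" "pclass act (nf_word t1 ps1) = pclass act u"
      "e = (if ps1 \<noteq> [] \<and> snd (last ps1) = 1 then fst (last ps1) else 1)" by blast
    have "nfo act (nf_word t1 ps1) = nfo act u" using h(2) u nf_word_ne[of t1 ps1] pclass_eq_iff[of "nf_word t1 ps1" u] by simp
    moreover have "nfp act ps1" using h(1) isNF_iff by simp
    ultimately have "(t1, ps1) = nfo act u" using nfo_nf_word by simp
    then show "e = starNF (nfo act u)" using h(3) by (metis snd_conv starNF_def)
  qed
  then show ?thesis by (simp add: pstar_def)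
qed

lemma pplus_pclass: "u \<noteq> [] \<Longrightarrow> pplus act (pclass act u) = pclass act [Inr (act_word act u 1)]"
proof -
  assume u: "u \<noteq> []"
  have "\<And>a. a \<in> pclass act u \<Longrightarrow> act_word act a 1 = act_word act u 1"
  proof -
    fix a assume "a \<in> pclass act u"
    then have "Pcong act u a" by (simp add: pclass_def)
    then have "nfo act u = nfo act a" using Pcong_nfo[of u a "[]"] by simp
    then show "act_word act a 1 = act_word act u 1" by (simp add: act_word_nfo)
  qed
  then have "\<And>w. (\<exists>a\<in>pclass act u. Pcong act [Inr (act_word act a 1)] w) \<longleftrightarrow> Pcong act [Inr (act_word act u 1)] w"
    using pclass_mem[OF u] by metis
  then show ?thesis unfolding pplus_def pclass_def by simp
qed

lemma nfo_Inr: "nfo act [Inr e] = (if e = 1 then (1, []) else (1, [(e, 1)]))"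
  by (simp add: act_one)

lemma embX_def': "embX act e = pclass act [Inr e]"
  by (simp add: embX_def)

lemma embX_inj: "embX act a = embX act b \<Longrightarrow> a = b"
proof -
  assume "embX act a = embX act b"
  then have "nfo act [Inr a] = nfo act [Inr b]" unfolding embX_def
    using pclass_eq_iff[of "[Inr a]" "[Inr b]"] by simp
  then show "a = b" unfolding nfo_Inr by (cases "a = 1"; cases "b = 1") simp_all
qed

lemma embX_mul: "pmul act (embX act a) (embX act b) = embX act (a * b)"
proof -
  have "pmul act (embX act a) (embX act b) = pclass act [Inr a, Inr b]"
    unfolding embX_def using pmul_pclass[of "[Inr a]" "[Inr b]" act] by simp
  also have "\<dots> = embX act (a * b)" unfolding embX_def by (rule pclass_eqI[OF Pcong.gen[OF Pgen.Xmul]])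
  finally show ?thesis .
qed

lemma embX_sle: "sle (pmul act) (embX act a) (embX act b) \<longleftrightarrow> sle (*) a b"
  unfolding sle_def embX_mul by (metis embX_inj)

lemma embX_sless: "sless (pmul act) (embX act a) (embX act b) \<longleftrightarrow> sless (*) a b"
  unfolding sless_def embX_sle by (metis embX_inj)

lemma pstar_embX: "pstar act (embX act e) = embX act e"
proof -
  have "pstar act (embX act e) = embX act (starNF (nfo act [Inr e]))"
    unfolding embX_def by (rule pstar_pclass[of "[Inr e]", unfolded embX_def]) simp
  also have "starNF (nfo act [Inr e]) = e" unfolding nfo_Inr by (cases "e = 1") (simp_all add: starNF_def)
  finally show ?thesis .
qed

lemma pplus_embX: "pplus act (embX act e) = embX act e"
proof -
  have "pplus act (embX act e) = pclass act [Inr (act_word act [Inr e] 1)]"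
    unfolding embX_def by (rule pplus_pclass) simp
  then show ?thesis by (simp add: embX_def)
qed

definition sinv :: "'x \<Rightarrow> 't \<times> ('x \<times> 't) list \<Rightarrow> bool" where
  "sinv g N \<longleftrightarrow> g = 1 \<or> (snd N \<noteq> [] \<and> snd (last (snd N)) = 1 \<and> fst (last (snd N)) * g = fst (last (snd N)))"

lemma star_inv:
  assumes "sinv g N"
  shows "sinv g (la act a N)"
proof (cases a)
  case (Inl s)
  have "snd (la act a N) = snd N" using Inl by (cases N) simp
  then show ?thesis using assms by (simp add: sinv_def)
next
  case (Inr e)
  define f where "f = pfN act N"
  show ?thesis
  proof (cases "e * f = f")
    case True then show ?thesis using assms Inr by (simp add: la_Inr_unch f_def)
  next
    case False
    then have L: "la act a N = (1, (e * f, lx N) # lr N)" using Inr by (simp add: la_Inr_ch f_def)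
    show ?thesis
    proof (cases "g = 1")
      case True then show ?thesis by (simp add: sinv_def)
    next
      case g: False
      then have A: "snd N \<noteq> []" "snd (last (snd N)) = 1" "fst (last (snd N)) * g = fst (last (snd N))"
        using assms by (simp_all add: sinv_def)
      show ?thesis
      proof (cases "fst N = 1")
        case True
        obtain t0 ps where N0: "N = (t0, ps)" by (cases N)
        have "ps \<noteq> []" using A(1) N0 by simp
        then obtain p ps' where "ps = p # ps'" by (cases ps) auto
        moreover obtain e1 t1 where "p = (e1, t1)" by (cases p)
        ultimately have N: "N = (1, (e1, t1) # ps')" using N0 True by simp
        have lxr: "lx N = t1" "lr N = ps'" by (simp_all add: N lx_def lr_def)
        show ?thesis
        proof (cases "ps' = []")
          case True
          then have t1: "t1 = 1" "e1 * g = e1" using A N by simp_all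
          have "f = e1" using True t1 by (simp add: f_def pfN_def N act_one)
          then show ?thesis using L lxr True t1 by (simp add: sinv_def mult.assoc)
        next
          case False
          then show ?thesis using L lxr A by (simp add: sinv_def N)
        qed
      next
        case False
        have lxr: "lx N = fst N" "lr N = snd N" using False by (simp_all add: lx_def lr_def)
        show ?thesis using L lxr A by (simp add: sinv_def)
      qed
    qed
  qed
qed

lemma star_app: "starNF (nfo act (w @ [Inr g])) * g = starNF (nfo act (w @ [Inr g]))"
proof -
  have "sinv g (nfo act (w @ [Inr g]))"
  proof (induction w)
    case Nil then show ?case by (simp add: nfo_Inr sinv_def idem del: nfo_Cons)
  next
    case (Cons a w) then show ?case using star_inv by simp
  qed
  then show ?thesis unfolding sinv_def starNF_def by (cases "g = 1") simp_all
qed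

end



definition hq :: "('t::monoid_mult \<Rightarrow> 'x::comm_monoid_mult \<Rightarrow> 'x) \<Rightarrow> 't \<Rightarrow> 'x \<Rightarrow> ('t, 'x) pword set" where
  "hq act t e = pclass act [Inl t, Inr e]"

definition wordc :: "('t \<times> 'x) list \<Rightarrow> ('t, 'x) pword" where
  "wordc cs = concat (map (\<lambda>(t, e). [Inl t, Inr e]) cs)"

fun encps :: "('t::monoid_mult \<times> 'x::comm_monoid_mult) list \<Rightarrow> ('x \<times> 't) list" where
  "encps [] = []"
| "encps [(t, e)] = (if e = 1 then [] else [(e, 1)])"
| "encps ((t, e) # (t', e') # r) = (e, t') # encps ((t', e') # r)"

fun canon :: "('t::monoid_mult \<Rightarrow> 'x::comm_monoid_mult \<Rightarrow> 'x) \<Rightarrow> ('t \<times> 'x) list \<Rightarrow> bool" where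
  "canon act [] = False"
| "canon act [(t, e)] = True"
| "canon act ((t, e) # (t', e') # r) = (sless (*) e (act t' e') \<and> t' \<noteq> 1 \<and> canon act ((t', e') # r))"

definition validY :: "('t::monoid_mult \<Rightarrow> 'x::comm_monoid_mult \<Rightarrow> 'x) \<Rightarrow> 'x set \<Rightarrow> ('t \<times> 'x) list \<Rightarrow> bool" where
  "validY act Y cs \<longleftrightarrow> (\<forall>p\<in>set cs. snd p \<in> Y \<and> act (fst p) (snd p) \<in> Y)"

definition valid :: "('t::monoid_mult \<Rightarrow> 'x::comm_monoid_mult \<Rightarrow> 'x) \<Rightarrow> 'x set \<Rightarrow> ('t \<times> 'x) list \<Rightarrow> bool" where
  "valid act Y cs \<longleftrightarrow> validY act Y cs \<and> canon act cs"

lemma wordc_Cons[simp]: "wordc ((t, e) # cs) = Inl t # Inr e # wordc cs"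
  by (simp add: wordc_def)

lemma wordc_Nil[simp]: "wordc [] = []"
  by (simp add: wordc_def)

lemma wordc_ne: "cs \<noteq> [] \<Longrightarrow> wordc cs \<noteq> []"
  by (cases cs) (auto simp: wordc_def)

lemma canon_ne: "canon act cs \<Longrightarrow> cs \<noteq> []"
  by (cases cs) auto

lemma lprod_Cons: "hs \<noteq> [] \<Longrightarrow> lprod mul (h # hs) = mul h (lprod mul hs)"
  by (simp add: lprod_def)

lemma lprod_single: "lprod mul [h] = h"
  by (simp add: lprod_def)

lemma lprod_map: "cs \<noteq> [] \<Longrightarrow> lprod (pmul act) (map (\<lambda>(t, e). hq act t e) cs) = pclass act (wordc cs)"
proof (induction cs)
  case Nil then show ?case by simp
next
  case (Cons p cs)
  obtain t e where p: "p = (t, e)" by (cases p)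
  show ?case
  proof (cases "cs = []")
    case True then show ?thesis using p by (simp add: lprod_single hq_def)
  next
    case False
    then show ?thesis using Cons p
      by (simp add: lprod_Cons hq_def pmul_pclass wordc_ne)
  qed
qed

lemma encps_hd: "encps ((t, e) # r) = encps ((t', e) # r)"
  by (cases r) auto

lemma canon_hd: "canon act ((t, e) # r) = canon act ((t', e) # r)"
  by (cases r) auto

lemma validY_Cons: "validY act Y ((t, e) # r) \<longleftrightarrow> e \<in> Y \<and> act t e \<in> Y \<and> validY act Y r"
  by (simp add: validY_def)

context nfl
begin

lemma pf_enc: "canon act cs \<Longrightarrow> cs = (t, e) # r \<Longrightarrow> pfun act t (encps cs) = act t e"
proof (induction cs arbitrary: t e r rule: induct_list012)
  case (2 x) then show ?case by (auto simp: act_one)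
next
  case (3 x y zs)
  obtain t' e' where y: "y = (t', e')" by (cases y)
  have cy: "canon act (y # zs)" using "3.prems"(1) y by (cases x) simp
  have "pfun act t' (encps (y # zs)) = act t' e'" using "3.IH"(2)[of t' e' zs] cy y by simp
  then show ?case using 3 y by (auto simp: sless_def sle_def)
qed auto

lemma nfo_word: "canon act cs \<Longrightarrow> cs = (t, e) # r \<Longrightarrow> nfo act (wordc cs) = (t, encps cs)"
proof (induction cs arbitrary: t e r rule: induct_list012)
  case (2 x)
  then show ?case by (auto simp: act_one lx_def lr_def)
next
  case (3 x y zs)
  obtain t' e' where y: "y = (t', e')" by (cases y)
  have cy: "canon act (y # zs)" using "3.prems"(1) y by (cases x) simp
  have IH: "nfo act (wordc (y # zs)) = (t', encps (y # zs))" using "3.IH"(2)[of t' e' zs] cy y by simp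
  have pf: "pfun act t' (encps (y # zs)) = act t' e'" using cy y by (intro pf_enc) simp_all
  have c: "canon act ((t, e) # (t', e') # zs)" using "3.prems" y by simp
  have s: "e * act t' e' = e" "e \<noteq> act t' e'" "t' \<noteq> 1" using c by (simp_all add: sless_def sle_def)
  have "la act (Inr e) (t', encps (y # zs)) = (1, (e, t') # encps (y # zs))"
    using s pf by (subst la_Inr_ch) (simp_all add: pfN_def lx_def lr_def)
  then have L: "la act (Inl t) (la act (Inr e) (nfo act (wordc (y # zs)))) = (t, (e, t') # encps (y # zs))"
    using IH by simp
  have xr: "x = (t, e)" "r = y # zs" using "3.prems"(2) by simp_all
  show ?case using L xr y by simp
qed auto

lemma starNF_Cons: "starNF (t, a # ps) = (if ps = [] then (if snd a = 1 then fst a else 1) else starNF (t', ps))"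
  by (simp add: starNF_def)

lemma star_enc: "canon act cs \<Longrightarrow> starNF (t, encps cs) = snd (last cs)"
proof (induction cs arbitrary: t rule: induct_list012)
  case (2 x) then show ?case by (cases x) (simp add: starNF_def)
next
  case (3 x y zs)
  obtain t1 e1 where x: "x = (t1, e1)" by (cases x)
  obtain t' e' where y: "y = (t', e')" by (cases y)
  show ?case
  proof (cases "encps (y # zs) = []")
    case True
    then have "zs = [] \<and> e' = 1" using y by (cases zs; auto split: if_splits)
    then show ?thesis using 3 x y by (simp add: starNF_def)
  next
    case False
    then show ?thesis using 3 x y by (simp add: starNF_Cons[where t'=t])
  qed
qed auto

lemma enc_inj: "canon act cs \<Longrightarrow> canon act ds \<Longrightarrow> encps cs = encps ds \<Longrightarrow> fst (hd cs) = fst (hd ds) \<Longrightarrow> cs = ds"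
proof (induction cs arbitrary: ds rule: induct_list012)
  case (2 x)
  obtain t e where x: "x = (t, e)" by (cases x)
  then obtain e2 r where ds: "ds = (t, e2) # r" using 2 by (cases ds) auto
  show ?case
  proof (cases r)
    case Nil then show ?thesis using 2 ds x by (auto split: if_splits)
  next
    case (Cons q r')
    then obtain t3 e3 where "q = (t3, e3)" by (cases q)
    then show ?thesis using 2 ds Cons x by (auto split: if_splits)
  qed
next
  case (3 x y zs)
  obtain t1 e1 where x: "x = (t1, e1)" by (cases x)
  obtain t' e' where y: "y = (t', e')" by (cases y)
  obtain e2 r where ds: "ds = (t1, e2) # r" using 3 x by (cases ds) auto
  show ?case
  proof (cases r)
    case Nil
    then show ?thesis using 3 ds x y by (auto split: if_splits)
  next
    case (Cons q r2)
    then obtain t3 e3 where q: "q = (t3, e3)" by (cases q)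
    have "y # zs = (t3, e3) # r2"
      using 3 ds Cons q x y by (intro "3.IH"(2)) auto
    then show ?thesis using 3 ds Cons q x y by auto
  qed
qed auto

end



locale qlq = nfl act for act :: "'t::monoid_mult \<Rightarrow> 'x::comm_monoid_mult \<Rightarrow> 'x" +
  fixes Y :: "'x set" and oneY :: 'x
  assumes Y_closed: "\<And>e f. e \<in> Y \<Longrightarrow> f \<in> Y \<Longrightarrow> e * f \<in> Y"
    and oneY_in: "oneY \<in> Y"
    and oneY_id: "\<And>e. e \<in> Y \<Longrightarrow> oneY * e = e"
    and condA: "\<And>t e f. e \<in> Y \<Longrightarrow> f \<in> Y \<Longrightarrow> e * f = e \<Longrightarrow> act t f \<in> Y \<Longrightarrow> act t e \<in> Y"
    and condB: "\<And>t. \<exists>g\<in>Y. act t g \<in> Y"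
begin

lemma nfo_hq: "nfo act [Inl t, Inr e] = (t, encps [(t, e)])"
  using nfo_word[of "[(t, e)]" t e "[]"] by simp

lemma hq_pstar: "pstar act (hq act t e) = embX act e"
proof -
  have "pstar act (hq act t e) = embX act (starNF (nfo act [Inl t, Inr e]))"
    unfolding hq_def by (rule pstar_pclass) simp
  also have "starNF (nfo act [Inl t, Inr e]) = e" unfolding nfo_hq using star_enc[of "[(t, e)]" t] by simp
  finally show ?thesis .
qed

lemma hq_pplus: "pplus act (hq act t e) = embX act (act t e)"
  unfolding hq_def embX_def by (subst pplus_pclass) simp_all

lemma hq_projC: "projC (hq act t e) = t"
  unfolding hq_def by (subst projC_pclass) simp_all

lemma embX_projC: "projC (embX act e) = 1"
  unfolding embX_def by (subst projC_pclass) simp_all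

lemma la_Inl1: "la act (Inl 1) N = N"
  by (cases N) simp

lemma hq_one: "hq act 1 e = embX act e"
proof -
  have "nfo act [Inl 1, Inr e] = nfo act [Inr e]" by (simp only: nfo_Cons la_Inl1)
  then show ?thesis unfolding hq_def embX_def using pclass_eq_iff[of "[Inl 1, Inr e]" "[Inr e]"] by simp
qed

lemma hq_embX: "pmul act (hq act t e) (embX act g) = hq act t (e * g)"
proof -
  have "pmul act (hq act t e) (embX act g) = pclass act ([Inl t] @ [Inr e, Inr g])"
    unfolding hq_def embX_def by (subst pmul_pclass) simp_all
  also have "\<dots> = pclass act ([Inl t] @ [Inr (e * g)])"
    by (rule pclass_eqI[OF Pcong_pre[OF W1[of act e g "[]"]]])
  finally show ?thesis by (simp add: hq_def)
qed

lemma hq_mul: "act s f * e = act s f \<Longrightarrow> pmul act (hq act t e) (hq act s f) = hq act (t * s) f"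
proof -
  assume a: "act s f * e = act s f"
  have "pmul act (hq act t e) (hq act s f) = pclass act (Inl t # Inr e # [Inl s, Inr f])"
    unfolding hq_def by (subst pmul_pclass) simp_all
  also have "\<dots> = hq act (t * s) f" unfolding hq_def
  proof (subst pclass_eq_iff)
    have pf: "pfN act (nfo act [Inl s, Inr f]) = act s f"
      unfolding nfo_hq pfN_def using pf_enc[of "[(s, f)]" s f "[]"] by simp
    then have "la act (Inr e) (nfo act [Inl s, Inr f]) = nfo act [Inl s, Inr f]"
      using a by (intro la_Inr_unch) (simp add: mult.commute)
    have "nfo act (Inl t # Inr e # [Inl s, Inr f]) = la act (Inl t) (la act (Inr e) (nfo act [Inl s, Inr f]))"
      by (simp only: nfo_Cons)
    also have "\<dots> = la act (Inl t) (s, encps [(s, f)])" using \<open>la act (Inr e) _ = _\<close> by (simp only: nfo_hq)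
    also have "\<dots> = (t * s, encps [(t * s, f)])" using encps_hd[of s f "[]" "t * s"] by simp
    also have "\<dots> = nfo act [Inl (t * s), Inr f]" by (simp only: nfo_hq)
    finally show "nfo act (Inl t # Inr e # [Inl s, Inr f]) = nfo act [Inl (t * s), Inr f]" .
  qed simp_all
  finally show ?thesis .
qed

lemma HQ_eq: "HQ act Y = {hq act t e | t e. e \<in> Y \<and> act t e \<in> Y}"
  unfolding HQ_def embT_def embX_def hq_def by (subst pmul_pclass) auto

lemma hq_wordc: "hq act t e = pclass act (wordc [(t, e)])"
  by (simp add: hq_def)

lemma pclass_wordc_Cons: "r \<noteq> [] \<Longrightarrow> pclass act (wordc ((t, e) # r)) = pmul act (hq act t e) (pclass act (wordc r))"
  unfolding hq_def by (subst pmul_pclass) (simp_all add: wordc_ne)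

lemma lmul:
  assumes V: "valid act Y D" and eY: "e \<in> Y" and teY: "act t e \<in> Y"
  shows "\<exists>cs. valid act Y cs \<and> pmul act (hq act t e) (pclass act (wordc D)) = pclass act (wordc cs)"
proof -
  have cD: "canon act D" and vY: "validY act Y D" using V by (simp_all add: valid_def)
  obtain t2 e2 ds where D: "D = (t2, e2) # ds" using canon_ne[OF cD] by (cases D) auto
  have nD: "nfo act (wordc D) = (t2, encps D)" using nfo_word[OF cD D] .
  have pD: "pfun act t2 (encps D) = act t2 e2" using pf_enc[OF cD D] .
  define f where "f = act t2 e2"
  have e2Y: "e2 \<in> Y" and fY: "f \<in> Y" and vds: "validY act Y ds" using vY D by (simp_all add: validY_Cons f_def)
  have prod: "pmul act (hq act t e) (pclass act (wordc D)) = pclass act (Inl t # Inr e # wordc D)"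
    unfolding hq_def by (subst pmul_pclass) (simp_all add: D)
  have nprod: "nfo act (Inl t # Inr e # wordc D) = la act (Inl t) (la act (Inr e) (t2, encps D))"
    using nD by simp
  have pfD: "pfN act (t2, encps D) = f" using pD by (simp add: pfN_def f_def)
  have eqI: "\<And>cs. valid act Y cs \<Longrightarrow> nfo act (Inl t # Inr e # wordc D) = nfo act (wordc cs) \<Longrightarrow>
      \<exists>cs. valid act Y cs \<and> pmul act (hq act t e) (pclass act (wordc D)) = pclass act (wordc cs)"
  proof -
    fix cs assume "valid act Y cs" "nfo act (Inl t # Inr e # wordc D) = nfo act (wordc cs)"
    moreover then have "wordc cs \<noteq> []" using wordc_ne canon_ne by (auto simp: valid_def)
    ultimately show "\<exists>cs. valid act Y cs \<and> pmul act (hq act t e) (pclass act (wordc D)) = pclass act (wordc cs)"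
      using prod pclass_eq_iff[of "Inl t # Inr e # wordc D" "wordc cs"] by auto
  qed
  show ?thesis
  proof (cases "e * f = f")
    case True
    define cs where "cs = (t * t2, e2) # ds"
    have cc: "canon act cs" using cD D canon_hd[of act t2 e2 ds "t * t2"] by (simp add: cs_def)
    have "act t f \<in> Y" using condA[of f e t] fY eY True teY by (simp add: mult.commute)
    then have vc: "valid act Y cs" using cc e2Y vds by (simp add: valid_def cs_def validY_Cons act_mult f_def)
    have "nfo act (wordc cs) = (t * t2, encps cs)" using nfo_word[OF cc] cs_def by simp
    also have "encps cs = encps D" using D cs_def encps_hd by metis
    finally have "nfo act (wordc cs) = (t * t2, encps D)" .
    moreover have "la act (Inr e) (t2, encps D) = (t2, encps D)" using True pfD by (intro la_Inr_unch) simp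
    ultimately show ?thesis using eqI[OF vc] nprod by simp
  next
    case False
    then have L: "la act (Inr e) (t2, encps D) = (1, (e * f, lx (t2, encps D)) # lr (t2, encps D))"
      using pfD by (subst la_Inr_ch) simp_all
    have efY: "e * f \<in> Y" using eY fY Y_closed by simp
    have teff: "act t (e * f) \<in> Y" using condA[of "e * f" e t] efY eY teY by (simp add: xs)
    show ?thesis
    proof (cases "t2 = 1")
      case True
      then have fe2: "f = e2" by (simp add: f_def act_one)
      define cs where "cs = (t, e * e2) # ds"
      have ne: "e * e2 \<noteq> e2" using False fe2 by simp
      have ne1: "e * e2 \<noteq> 1"
      proof
        assume "e * e2 = 1"
        then have "e2 = e2 * (e * e2)" by simp
        also have "\<dots> = e * e2" by (simp add: xs)
        finally show False using ne by simp
      qed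
      have cc: "canon act cs"
      proof (cases ds)
        case Nil then show ?thesis by (simp add: cs_def)
      next
        case (Cons q r)
        obtain t3 e3 where q: "q = (t3, e3)" by (cases q)
        have h: "sless (*) e2 (act t3 e3)" "t3 \<noteq> 1" "canon act ((t3, e3) # r)" using cD D Cons q by simp_all
        have "e * e2 \<noteq> act t3 e3"
        proof
          assume a: "e * e2 = act t3 e3"
          have "e2 = e2 * act t3 e3" using h(1) by (simp add: sless_def sle_def)
          also have "\<dots> = e * e2" using a[symmetric] by (simp add: xs)
          finally show False using ne by simp
        qed
        moreover have "e * e2 * act t3 e3 = e * e2" using h(1) by (simp add: sless_def sle_def mult.assoc)
        ultimately show ?thesis using h Cons q by (simp add: cs_def sless_def sle_def)
      qed
      have vc: "valid act Y cs" using cc vds teff efY fe2 by (simp add: valid_def cs_def validY_Cons)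
      have enc: "encps cs = (e * e2, lx (t2, encps D)) # lr (t2, encps D)"
      proof (cases ds)
        case Nil
        show ?thesis
        proof (cases "e2 = 1")
          case True then show ?thesis using Nil D \<open>t2 = 1\<close> ne1 by (simp add: cs_def lx_def lr_def)
        next
          case False then show ?thesis using Nil D \<open>t2 = 1\<close> ne1 by (simp add: cs_def lx_def lr_def)
        qed
      next
        case (Cons q r)
        obtain t3 e3 where q: "q = (t3, e3)" by (cases q)
        show ?thesis using Cons q D \<open>t2 = 1\<close> by (simp add: cs_def lx_def lr_def)
      qed
      have "nfo act (wordc cs) = (t, encps cs)" using nfo_word[OF cc] cs_def by simp
      then show ?thesis using eqI[OF vc] nprod L enc fe2 by simp
    next
      case t2: False
      define cs where "cs = (t, e * f) # D"
      have "e * f * f = e * f" by (simp add: xs)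
      then have cc: "canon act cs" using cD D t2 False by (simp add: cs_def sless_def sle_def f_def)
      have vc: "valid act Y cs" using cc vY teff efY by (simp add: valid_def cs_def validY_Cons)
      have enc: "encps cs = (e * f, lx (t2, encps D)) # lr (t2, encps D)"
        using D t2 by (simp add: cs_def lx_def lr_def)
      have "nfo act (wordc cs) = (t, encps cs)" using nfo_word[OF cc] cs_def by simp
      then show ?thesis using eqI[OF vc] nprod L enc by simp
    qed
  qed
qed

end



declare wordc_Cons[simp del]

context qlq
begin

definition Cset where "Cset = {pclass act (wordc cs) | cs. valid act Y cs}"

lemma valid_ne: "valid act Y cs \<Longrightarrow> cs \<noteq> []"
  using canon_ne by (auto simp: valid_def)

lemma pmul_assoc_pc: "u \<noteq> [] \<Longrightarrow> v \<noteq> [] \<Longrightarrow> w \<noteq> [] \<Longrightarrow>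
  pmul act (pmul act (pclass act u) (pclass act v)) (pclass act w) = pmul act (pclass act u) (pmul act (pclass act v) (pclass act w))"
  by (simp add: pmul_pclass)

lemma C_sub_Ql: "validY act Y cs \<Longrightarrow> cs \<noteq> [] \<Longrightarrow> pclass act (wordc cs) \<in> Ql act Y"
proof (induction cs)
  case Nil then show ?case by simp
next
  case (Cons p r)
  obtain t e where p: "p = (t, e)" by (cases p)
  have teY: "e \<in> Y" "act t e \<in> Y" using Cons.prems p by (simp_all add: validY_Cons)
  have hQ: "hq act t e \<in> Ql act Y" unfolding Ql_def using teY by (intro sg_gen.gen) (auto simp: HQ_eq)
  show ?case
  proof (cases "r = []")
    case True then show ?thesis using hQ p by (simp add: hq_def wordc_Cons)
  next
    case False
    have "pclass act (wordc r) \<in> Ql act Y" using Cons False p by (simp add: validY_Cons)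
    then show ?thesis using hQ False p pclass_wordc_Cons unfolding Ql_def by (simp add: sg_gen.mul)
  qed
qed

lemma Ql_sub_C: "a \<in> Ql act Y \<Longrightarrow> a \<in> Cset"
proof -
  assume "a \<in> Ql act Y"
  then have "a \<in> Cset \<and> (\<forall>b\<in>Cset. pmul act a b \<in> Cset)" unfolding Ql_def
  proof (induction rule: sg_gen.induct)
    case (gen a)
    then obtain t e where a: "a = hq act t e" "e \<in> Y" "act t e \<in> Y" by (auto simp: HQ_eq)
    have "valid act Y [(t, e)]" using a by (simp add: valid_def validY_def)
    then have "a \<in> Cset" unfolding Cset_def using a(1) hq_wordc[of t e] by blast
    moreover have "\<forall>b\<in>Cset. pmul act a b \<in> Cset"
      using lmul a unfolding Cset_def by blast
    ultimately show ?case by blast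
  next
    case (mul a b)
    then have ab: "pmul act a b \<in> Cset" by blast
    have "\<forall>c\<in>Cset. pmul act (pmul act a b) c \<in> Cset"
    proof
      fix c assume c: "c \<in> Cset"
      obtain ca where "valid act Y ca" "a = pclass act (wordc ca)" using mul by (auto simp: Cset_def)
      moreover obtain cb where "valid act Y cb" "b = pclass act (wordc cb)" using mul by (auto simp: Cset_def)
      moreover obtain cc where "valid act Y cc" "c = pclass act (wordc cc)" using c by (auto simp: Cset_def)
      moreover have "wordc ca \<noteq> []" "wordc cb \<noteq> []" "wordc cc \<noteq> []"
        using calculation wordc_ne valid_ne by blast+
      ultimately have "pmul act (pmul act a b) c = pmul act a (pmul act b c)"
        using pmul_assoc_pc[of "wordc ca" "wordc cb" "wordc cc"] by simp
      moreover have "pmul act b c \<in> Cset" using mul c by blast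
      ultimately show "pmul act (pmul act a b) c \<in> Cset" using mul by simp
    qed
    then show ?case using ab by blast
  qed
  then show ?thesis by blast
qed

lemma Ql_eq: "Ql act Y = Cset"
  using Ql_sub_C C_sub_Ql valid_ne unfolding Cset_def valid_def by blast

lemma Qrep: "a \<in> Ql act Y \<Longrightarrow> \<exists>cs. valid act Y cs \<and> a = pclass act (wordc cs)"
  using Ql_eq unfolding Cset_def by blast

lemma Q_pc: "valid act Y cs \<Longrightarrow> pclass act (wordc cs) \<in> Ql act Y"
  using Ql_eq unfolding Cset_def by blast

lemma hq_Q: "e \<in> Y \<Longrightarrow> act t e \<in> Y \<Longrightarrow> hq act t e \<in> Ql act Y"
  unfolding Ql_def by (intro sg_gen.gen) (auto simp: HQ_eq)

lemma hq_HQ: "e \<in> Y \<Longrightarrow> act t e \<in> Y \<Longrightarrow> hq act t e \<in> HQ act Y"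
  by (auto simp: HQ_eq)

lemma embX_Q: "f \<in> Y \<Longrightarrow> embX act f \<in> Ql act Y"
  using hq_Q[of f 1] by (simp add: hq_one act_one)

lemma embX_HQ: "f \<in> Y \<Longrightarrow> embX act f \<in> HQ act Y"
  using hq_HQ[of f 1] by (simp add: hq_one act_one)

lemma act_word_wordc: "canon act cs \<Longrightarrow> cs = (t, e) # r \<Longrightarrow> act_word act (wordc cs) 1 = act t e"
  using nfo_word[of cs t e r] pf_enc[of cs t e r] by (simp add: act_word_nfo pfN_def del: wordc_Cons)

lemma pplus_pc: "canon act cs \<Longrightarrow> cs = (t, e) # r \<Longrightarrow> pplus act (pclass act (wordc cs)) = embX act (act t e)"
  by (simp add: pplus_pclass wordc_ne canon_ne act_word_wordc embX_def del: wordc_Cons)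

lemma pstar_pc: "canon act cs \<Longrightarrow> pstar act (pclass act (wordc cs)) = embX act (snd (last cs))"
proof -
  assume c: "canon act cs"
  then obtain t e r where cs: "cs = (t, e) # r" using canon_ne by (cases cs) auto
  show ?thesis using c cs by (simp add: pstar_pclass wordc_ne nfo_word star_enc del: wordc_Cons)
qed

lemma Q_pplus: "a \<in> Ql act Y \<Longrightarrow> \<exists>f\<in>Y. pplus act a = embX act f"
proof -
  assume "a \<in> Ql act Y"
  then obtain cs where v: "valid act Y cs" "a = pclass act (wordc cs)" using Qrep by blast
  then obtain t e r where cs: "cs = (t, e) # r" using valid_ne by (cases cs) auto
  have "act t e \<in> Y" using v cs by (simp add: valid_def validY_Cons)
  then show ?thesis using pplus_pc[of cs t e r] v cs by (auto simp: valid_def)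
qed

lemma Q_pstar: "a \<in> Ql act Y \<Longrightarrow> \<exists>f\<in>Y. pstar act a = embX act f"
proof -
  assume "a \<in> Ql act Y"
  then obtain cs where v: "valid act Y cs" "a = pclass act (wordc cs)" using Qrep by blast
  have "snd (last cs) \<in> Y" using v valid_ne[OF v(1)] last_in_set[of cs] by (auto simp: valid_def validY_def)
  then show ?thesis using pstar_pc v by (auto simp: valid_def)
qed

lemma pplus_Q: "pplus act ` Ql act Y = embX act ` Y"
proof
  show "pplus act ` Ql act Y \<subseteq> embX act ` Y" using Q_pplus by blast
next
  show "embX act ` Y \<subseteq> pplus act ` Ql act Y"
  proof
    fix x assume "x \<in> embX act ` Y"
    then obtain f where "f \<in> Y" "x = embX act f" by blast
    then show "x \<in> pplus act ` Ql act Y" using embX_Q pplus_embX by (metis image_eqI)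
  qed
qed

lemma Q_ne: "a \<in> Ql act Y \<Longrightarrow> \<exists>u. u \<noteq> [] \<and> a = pclass act u"
  using Qrep valid_ne wordc_ne by metis

lemma right_id:
  assumes v: "valid act Y cs" and g: "snd (last cs) * g = snd (last cs)"
  shows "pmul act (pclass act (wordc cs)) (embX act g) = pclass act (wordc cs)"
proof -
  have ne: "cs \<noteq> []" using valid_ne[OF v] .
  obtain tn en where l: "last cs = (tn, en)" by (cases "last cs")
  have "wordc cs = wordc (butlast cs @ [last cs])" using append_butlast_last_id[OF ne] by simp
  then have w: "wordc cs = wordc (butlast cs) @ [Inl tn, Inr en]"
    using l by (simp add: wordc_def)
  have "pmul act (pclass act (wordc cs)) (embX act g) = pclass act ((wordc (butlast cs) @ [Inl tn]) @ [Inr en, Inr g] @ [])"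
    unfolding embX_def by (subst pmul_pclass) (simp_all add: wordc_ne ne w)
  also have "\<dots> = pclass act ((wordc (butlast cs) @ [Inl tn]) @ [Inr (en * g)] @ [])"
    by (rule pclass_eqI[OF Pcong.ctxt[OF Pcong.gen[OF Pgen.Xmul]]])
  also have "\<dots> = pclass act (wordc cs)" using g l w by simp
  finally show ?thesis .
qed

lemma Q_is_monoid: "is_monoid (Ql act Y) (pmul act) (embX act oneY)"
  unfolding is_monoid_def
proof (intro conjI ballI)
  show "embX act oneY \<in> Ql act Y" using embX_Q oneY_in by simp
next
  fix x y assume "x \<in> Ql act Y" "y \<in> Ql act Y"
  then show "pmul act x y \<in> Ql act Y" unfolding Ql_def by (rule sg_gen.mul)
next
  fix x y z assume "x \<in> Ql act Y" "y \<in> Ql act Y" "z \<in> Ql act Y"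
  then obtain u v w where "u \<noteq> []" "v \<noteq> []" "w \<noteq> []" "x = pclass act u" "y = pclass act v" "z = pclass act w"
    using Q_ne by meson
  then show "pmul act (pmul act x y) z = pmul act x (pmul act y z)"
    using pmul_assoc_pc by simp
next
  fix x assume "x \<in> Ql act Y"
  then obtain cs where v: "valid act Y cs" "x = pclass act (wordc cs)" using Qrep by blast
  then obtain t e r where cs: "cs = (t, e) # r" using valid_ne by (cases cs) auto
  have teY: "act t e \<in> Y" using v cs by (simp add: valid_def validY_Cons)
  have "pmul act (embX act oneY) x = pclass act (Inr oneY # wordc cs)"
    unfolding embX_def v(2) by (subst pmul_pclass) (simp_all add: cs wordc_Cons)
  also have "\<dots> = x"
  proof -
    have pf: "pfN act (nfo act (wordc cs)) = act t e"
      using act_word_wordc[of cs t e r] v cs by (simp add: act_word_nfo valid_def)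
    have "nfo act (Inr oneY # wordc cs) = nfo act (wordc cs)"
      using pf oneY_id[OF teY] by (simp del: wordc_Cons add: la_Inr_unch)
    then show ?thesis unfolding v(2) by (subst pclass_eq_iff) (simp_all add: cs wordc_Cons)
  qed
  finally show "pmul act (embX act oneY) x = x" .
  have "snd (last cs) \<in> Y" using v valid_ne[OF v(1)] last_in_set[of cs] by (auto simp: valid_def validY_def)
  then have "snd (last cs) * oneY = snd (last cs)" using oneY_id[of "snd (last cs)"] by (simp add: mult.commute)
  then show "pmul act x (embX act oneY) = x" using right_id v by simp
qed

end



context qlq
begin

abbreviation "M \<equiv> Ql act Y"
abbreviation "S \<equiv> sigma (Ql act Y) (pmul act) (pplus act)"

lemma Q_pclass_ne: "a \<in> M \<Longrightarrow> (\<And>u. u \<noteq> [] \<Longrightarrow> a = pclass act u \<Longrightarrow> P) \<Longrightarrow> P"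
  using Q_ne by blast

lemma pl_x_x: "u \<noteq> [] \<Longrightarrow> pmul act (pplus act (pclass act u)) (pclass act u) = pclass act u"
  by (simp add: pplus_pclass pmul_pclass pclass_eqI[OF W3])

lemma pl_mul: "u \<noteq> [] \<Longrightarrow> v \<noteq> [] \<Longrightarrow>
  pplus act (pmul act (pclass act u) (pclass act v)) = pplus act (pmul act (pclass act u) (pplus act (pclass act v)))"
  by (simp add: pplus_pclass pmul_pclass act_word_append)

lemma Q_star_left_ehresmann: "star_left_ehresmann M (pmul act) (embX act oneY) (pplus act) (pstar act)"
  unfolding star_left_ehresmann_def
proof (intro conjI ballI)
  show "is_monoid M (pmul act) (embX act oneY)" by (rule Q_is_monoid)
next
  fix x assume x: "x \<in> M"
  obtain f where f: "f \<in> Y" "pplus act x = embX act f" using Q_pplus[OF x] by blast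
  obtain g where g: "g \<in> Y" "pstar act x = embX act g" using Q_pstar[OF x] by blast
  show "pplus act x \<in> M" using f embX_Q by simp
  show "pstar act x \<in> M" using g embX_Q by simp
  show "pmul act (pplus act x) x = x" using x pl_x_x by (metis Q_ne)
  show "pstar act (pstar act x) = pstar act x" using g pstar_embX by simp
  show "pplus act (pstar act x) = pstar act x" using g pplus_embX by simp
  show "pstar act (pplus act x) = pplus act x" using f pstar_embX by simp
  obtain cs where v: "valid act Y cs" "x = pclass act (wordc cs)" using Qrep[OF x] by blast
  have "pstar act x = embX act (snd (last cs))" using v pstar_pc by (simp add: valid_def)
  then show "pmul act x (pstar act x) = x" using right_id[OF v(1)] v(2) by (simp add: idem)
next
  fix x y assume x: "x \<in> M" and y: "y \<in> M"
  obtain f where f: "f \<in> Y" "pplus act x = embX act f" using Q_pplus[OF x] by blast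
  obtain g where g: "g \<in> Y" "pstar act x = embX act g" using Q_pstar[OF x] by blast
  obtain f' where f': "f' \<in> Y" "pplus act y = embX act f'" using Q_pplus[OF y] by blast
  obtain g' where g': "g' \<in> Y" "pstar act y = embX act g'" using Q_pstar[OF y] by blast
  show "pplus act (pmul act (pplus act x) (pplus act y)) = pmul act (pplus act x) (pplus act y)"
    using f f' by (simp add: embX_mul pplus_embX)
  show "pmul act (pplus act x) (pplus act y) = pmul act (pplus act y) (pplus act x)"
    using f f' by (simp add: embX_mul mult.commute)
  show "pplus act (pmul act x y) = pplus act (pmul act x (pplus act y))"
    using x y pl_mul by (metis Q_ne)
  show "pmul act (pstar act x) (pstar act y) = pmul act (pstar act y) (pstar act x)"
    using g g' by (simp add: embX_mul mult.commute)
  obtain u where u: "u \<noteq> []" "x = pclass act u" using Q_ne[OF x] by blast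
  have xy: "pmul act x (pstar act y) = pclass act (u @ [Inr g'])"
    using u g' by (simp add: embX_def pmul_pclass)
  have "pstar act (pmul act x (pstar act y)) = embX act (starNF (nfo act (u @ [Inr g'])))"
    using xy by (simp add: pstar_pclass)
  then show "pmul act (pstar act (pmul act x (pstar act y))) (pstar act y) = pstar act (pmul act x (pstar act y))"
    using g' star_app by (simp add: embX_mul)
qed

lemma sig_base: "f \<in> Y \<Longrightarrow> g \<in> Y \<Longrightarrow> (embX act f, embX act g) \<in> S"
  unfolding sigma_def pplus_Q by (intro sigma_rel.base) auto

lemma sig_refl: "a \<in> M \<Longrightarrow> (a, a) \<in> S"
  unfolding sigma_def by (rule sigma_rel.refl)

lemma sig_sym: "(a, b) \<in> S \<Longrightarrow> (b, a) \<in> S"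
  unfolding sigma_def by (rule sigma_rel.sym)

lemma sig_trans: "(a, b) \<in> S \<Longrightarrow> (b, c) \<in> S \<Longrightarrow> (a, c) \<in> S"
  unfolding sigma_def by (rule sigma_rel.trans)

lemma sig_left: "(a, b) \<in> S \<Longrightarrow> c \<in> M \<Longrightarrow> (pmul act c a, pmul act c b) \<in> S"
  unfolding sigma_def by (rule sigma_rel.left)

lemma sig_right: "(a, b) \<in> S \<Longrightarrow> c \<in> M \<Longrightarrow> (pmul act a c, pmul act b c) \<in> S"
  unfolding sigma_def by (rule sigma_rel.right)

lemma sig_hq:
  assumes "a \<in> Y" "act t a \<in> Y" "b \<in> Y" "act t b \<in> Y"
  shows "(hq act t a, hq act t b) \<in> S"
proof -
  have Ma: "hq act t a \<in> M" and Mb: "hq act t b \<in> M" using assms hq_Q by simp_all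
  have "(pmul act (hq act t a) (embX act a), pmul act (hq act t a) (embX act b)) \<in> S"
    using sig_left[OF sig_base Ma] assms by simp
  then have 1: "(hq act t a, hq act t (a * b)) \<in> S" by (simp add: hq_embX idem)
  have "(pmul act (hq act t b) (embX act b), pmul act (hq act t b) (embX act a)) \<in> S"
    using sig_left[OF sig_base Mb] assms by simp
  then have 2: "(hq act t b, hq act t (a * b)) \<in> S" by (simp add: hq_embX idem mult.commute)
  show ?thesis using sig_trans[OF 1 sig_sym[OF 2]] .
qed

lemma projC_mul: "a \<in> M \<Longrightarrow> b \<in> M \<Longrightarrow> projC (pmul act a b) = projC a * projC b"
proof -
  assume a: "a \<in> M" and b: "b \<in> M"
  obtain u where u: "u \<noteq> []" "a = pclass act u" using Q_ne[OF a] by blast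
  obtain v where v: "v \<noteq> []" "b = pclass act v" using Q_ne[OF b] by blast
  show ?thesis using u v by (simp add: pmul_pclass projC_pclass projw_append)
qed

lemma sig_proj: "(a, b) \<in> S \<Longrightarrow> a \<in> M \<and> b \<in> M \<and> projC a = projC b"
  unfolding sigma_def
proof (induction rule: sigma_rel.induct)
  case (base e f)
  then obtain e' f' where "e' \<in> Y" "f' \<in> Y" "e = embX act e'" "f = embX act f'" using pplus_Q by auto
  then show ?case using embX_Q embX_projC by simp
next
  case (left a b c)
  then show ?case using projC_mul by (simp add: Q_is_monoid[unfolded is_monoid_def])
next
  case (right a b c)
  then show ?case using projC_mul by (simp add: Q_is_monoid[unfolded is_monoid_def])
qed auto

lemma H4: "m \<in> M \<Longrightarrow> \<exists>h\<in>HQ act Y. (m, h) \<in> S"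
proof -
  assume "m \<in> M"
  then obtain cs where v: "valid act Y cs" "m = pclass act (wordc cs)" using Qrep by blast
  have "validY act Y cs" "cs \<noteq> []" using v valid_ne by (simp_all add: valid_def)
  then have "\<exists>t e. e \<in> Y \<and> act t e \<in> Y \<and> (pclass act (wordc cs), hq act t e) \<in> S"
  proof (induction cs)
    case Nil then show ?case by simp
  next
    case (Cons p r)
    obtain t e where p: "p = (t, e)" by (cases p)
    have te: "e \<in> Y" "act t e \<in> Y" using Cons.prems p by (simp_all add: validY_Cons)
    show ?case
    proof (cases "r = []")
      case True
      have "(hq act t e, hq act t e) \<in> S" using te hq_Q sig_refl by simp
      then show ?thesis using te p True by (auto simp: hq_wordc)
    next
      case False
      then obtain s f where sf: "f \<in> Y" "act s f \<in> Y" "(pclass act (wordc r), hq act s f) \<in> S"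
        using Cons p by (auto simp: validY_Cons)
      obtain g0 where g0: "g0 \<in> Y" "act (t * s) g0 \<in> Y" using condB by blast
      define g where "g = g0 * f"
      have gY: "g \<in> Y" using g0 sf Y_closed by (simp add: g_def)
      have sgY: "act s g \<in> Y" using condA[of g f s] gY sf by (simp add: g_def xs)
      have tsgY: "act (t * s) g \<in> Y" using condA[of g g0 "t * s"] gY g0 by (simp add: g_def xs)
      have tsgY': "act t (act s g) \<in> Y" using tsgY by (simp add: act_mult)
      have rM: "pclass act (wordc r) \<in> M" using Cons.prems False p by (intro C_sub_Ql) (simp_all add: validY_Cons)
      have eq: "pclass act (wordc ((t, e) # r)) = pmul act (hq act t e) (pclass act (wordc r))"
        using pclass_wordc_Cons[OF False] .
      have s1: "(pmul act (hq act t e) (pclass act (wordc r)), pmul act (hq act t e) (hq act s f)) \<in> S"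
        using sig_left[OF sf(3)] hq_Q te by simp
      have s2: "(pmul act (hq act t e) (hq act s f), pmul act (hq act t (act s g)) (hq act s f)) \<in> S"
        using sig_right[OF sig_hq[OF te sgY tsgY']] hq_Q sf by simp
      have s3: "(pmul act (hq act t (act s g)) (hq act s f), pmul act (hq act t (act s g)) (hq act s g)) \<in> S"
        using sig_left[OF sig_hq[OF sf(1,2) gY sgY]] hq_Q sgY tsgY' by simp
      have s4: "pmul act (hq act t (act s g)) (hq act s g) = hq act (t * s) g"
        by (rule hq_mul) (simp add: idem)
      show ?thesis using sig_trans[OF s1 sig_trans[OF s2 s3]] s4 eq gY tsgY p by metis
    qed
  qed
  then show ?thesis using v hq_HQ by blast
qed

lemma H5: "h \<in> HQ act Y \<Longrightarrow> k \<in> HQ act Y \<Longrightarrow> w \<in> HQ act Y \<Longrightarrow> (pmul act h k, w) \<in> S \<Longrightarrow> pstar act k = pstar act w \<Longrightarrow>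
   \<exists>u\<in>HQ act Y. (u, h) \<in> S \<and> sle (pmul act) (pplus act k) (pstar act u)"
proof -
  assume h: "h \<in> HQ act Y" and k: "k \<in> HQ act Y" and w: "w \<in> HQ act Y" and sg: "(pmul act h k, w) \<in> S"
    and st: "pstar act k = pstar act w"
  obtain t e where h': "h = hq act t e" "e \<in> Y" "act t e \<in> Y" using h by (auto simp: HQ_eq)
  obtain s f where k': "k = hq act s f" "f \<in> Y" "act s f \<in> Y" using k by (auto simp: HQ_eq)
  obtain r g where w': "w = hq act r g" "g \<in> Y" "act r g \<in> Y" using w by (auto simp: HQ_eq)
  have fg: "f = g" using st h' k' w' by (simp add: hq_pstar embX_inj)
  have "projC (pmul act h k) = projC w" using sig_proj[OF sg] by simp
  then have rts: "r = t * s" using h' k' w' hq_Q by (simp add: projC_mul hq_projC)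
  define u where "u = hq act t (act s f)"
  have uH: "u \<in> HQ act Y" using k' w' fg rts by (simp add: u_def hq_HQ act_mult[symmetric])
  have "(u, h) \<in> S" unfolding u_def h'(1) using sig_hq k' w' fg rts h' by (simp add: act_mult[symmetric])
  moreover have "sle (pmul act) (pplus act k) (pstar act u)"
    by (simp add: u_def k' hq_pstar hq_pplus embX_mul sle_def idem)
  ultimately show ?thesis using uH by blast
qed

end



context qlq
begin

lemma hq_notE: "e \<in> Y \<Longrightarrow> hq act t e \<notin> pplus act ` M \<longleftrightarrow> t \<noteq> 1"
proof
  assume "e \<in> Y" "hq act t e \<notin> pplus act ` M"
  then show "t \<noteq> 1" using pplus_Q hq_one by auto
next
  assume t: "t \<noteq> 1"
  show "hq act t e \<notin> pplus act ` M"
  proof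
    assume "hq act t e \<in> pplus act ` M"
    then obtain f where "hq act t e = embX act f" using pplus_Q by auto
    then have "projC (hq act t e) = projC (embX act f)" by simp
    then show False using t by (simp add: hq_projC embX_projC)
  qed
qed

lemma Q_atomic: "atomic M (pmul act) (pplus act) (pstar act) (HQ act Y)"
  unfolding atomic_def
proof (intro conjI ballI impI)
  show "HQ act Y \<subseteq> M" unfolding Ql_def by (auto intro: sg_gen.gen)
  show "pplus act ` M \<subseteq> HQ act Y" using pplus_Q embX_HQ by auto
next
  fix h e assume h: "h \<in> HQ act Y" and e: "e \<in> pplus act ` M"
  obtain t a where h': "h = hq act t a" "a \<in> Y" "act t a \<in> Y" using h by (auto simp: HQ_eq)
  obtain g where g: "g \<in> Y" "e = embX act g" using e pplus_Q by auto
  have agY: "a * g \<in> Y" using h' g Y_closed by simp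
  have "act t (a * g) \<in> Y" using condA[of "a * g" a t] agY h' by (simp add: xs)
  then show "pmul act h e \<in> HQ act Y" using h' g agY by (simp add: hq_embX hq_HQ)
  show "pstar act (pmul act h e) = pmul act (pstar act h) e"
    using h' g by (simp add: hq_embX hq_pstar embX_mul)
next
  fix h k assume h: "h \<in> HQ act Y" and k: "k \<in> HQ act Y - pplus act ` M"
    and le: "sle (pmul act) (pplus act k) (pstar act h)"
  obtain t e where h': "h = hq act t e" "e \<in> Y" "act t e \<in> Y" using h by (auto simp: HQ_eq)
  obtain s f where k': "k = hq act s f" "f \<in> Y" "act s f \<in> Y" using k by (auto simp: HQ_eq)
  have "sle (*) (act s f) e" using le h' k' embX_sle by (simp add: hq_pplus hq_pstar)
  then have le': "act s f * e = act s f" by (simp add: sle_def)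
  have "act t (act s f) \<in> Y" using condA[of "act s f" e t] le' h' k' by simp
  then show "pmul act h k \<in> HQ act Y" using h' k' le' by (simp add: hq_mul hq_HQ act_mult)
  show "pstar act (pmul act h k) = pstar act k" using h' k' le' by (simp add: hq_mul hq_pstar)
next
  fix m assume "m \<in> M" then show "\<exists>h\<in>HQ act Y. (m, h) \<in> S" by (rule H4)
next
  fix h k w assume "h \<in> HQ act Y" "k \<in> HQ act Y" "w \<in> HQ act Y" "(pmul act h k, w) \<in> S \<and> pstar act k = pstar act w"
  then show "\<exists>u\<in>HQ act Y. (u, h) \<in> S \<and> sle (pmul act) (pplus act k) (pstar act u)"
    using H5 by blast
qed

lemma Q_proper: "proper M (pmul act) (pplus act) (pstar act) (HQ act Y)"
  unfolding proper_def
proof (intro ballI iffI)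
  fix h k assume h: "h \<in> HQ act Y" and k: "k \<in> HQ act Y" and a: "pstar act h = pstar act k \<and> (h, k) \<in> S"
  obtain t e where h': "h = hq act t e" "e \<in> Y" "act t e \<in> Y" using h by (auto simp: HQ_eq)
  obtain s f where k': "k = hq act s f" "f \<in> Y" "act s f \<in> Y" using k by (auto simp: HQ_eq)
  have "e = f" using a h' k' by (simp add: hq_pstar embX_inj)
  moreover have "t = s" using sig_proj[of h k] a h' k' by (simp add: hq_projC)
  ultimately show "h = k" using h' k' by simp
next
  fix h k assume h: "h \<in> HQ act Y" and "h = k"
  then show "pstar act h = pstar act k \<and> (h, k) \<in> S" using sig_refl Q_atomic by (auto simp: atomic_def)
qed

definition hqc :: "'t \<times> 'x \<Rightarrow> ('t, 'x) pword set" where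
  "hqc p = hq act (fst p) (snd p)"

lemma lprod_hqc: "cs \<noteq> [] \<Longrightarrow> lprod (pmul act) (map hqc cs) = pclass act (wordc cs)"
proof -
  assume "cs \<noteq> []"
  moreover have "hqc = (\<lambda>(t, e). hq act t e)" by (auto simp: hqc_def)
  ultimately show ?thesis using lprod_map by simp
qed

lemma lift_HQ: "set hs \<subseteq> HQ act Y \<Longrightarrow> \<exists>cs. validY act Y cs \<and> hs = map hqc cs"
proof (induction hs)
  case Nil then show ?case by (auto simp: validY_def)
next
  case (Cons h hs)
  then obtain cs where cs: "validY act Y cs" "hs = map hqc cs" by auto
  obtain t e where "h = hq act t e" "e \<in> Y" "act t e \<in> Y" using Cons.prems by (auto simp: HQ_eq)
  then show ?case using cs by (intro exI[of _ "(t, e) # cs"]) (simp add: validY_Cons hqc_def)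
qed

lemma P2_Cons: "(\<forall>i. 0 < i \<and> i < length (x # xs) \<longrightarrow> P i) \<longleftrightarrow> (\<forall>j. j < length xs \<longrightarrow> P (Suc j))"
proof
  assume a: "\<forall>i. 0 < i \<and> i < length (x # xs) \<longrightarrow> P i"
  show "\<forall>j. j < length xs \<longrightarrow> P (Suc j)"
  proof (intro allI impI)
    fix j assume "j < length xs" then show "P (Suc j)" using a[rule_format, of "Suc j"] by simp
  qed
next
  assume a: "\<forall>j. j < length xs \<longrightarrow> P (Suc j)"
  show "\<forall>i. 0 < i \<and> i < length (x # xs) \<longrightarrow> P i"
  proof (intro allI impI)
    fix i assume i: "0 < i \<and> i < length (x # xs)"
    then obtain j where "i = Suc j" by (cases i) auto
    then show "P i" using a i by simp
  qed
qed

lemma P3_Cons: "(\<forall>j. j < length (y # zs) \<longrightarrow> P j) \<longleftrightarrow> P 0 \<and> (\<forall>i. 0 < i \<and> i < length (y # zs) \<longrightarrow> P i)"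
proof
  assume "\<forall>j. j < length (y # zs) \<longrightarrow> P j"
  then show "P 0 \<and> (\<forall>i. 0 < i \<and> i < length (y # zs) \<longrightarrow> P i)" by simp
next
  assume a: "P 0 \<and> (\<forall>i. 0 < i \<and> i < length (y # zs) \<longrightarrow> P i)"
  show "\<forall>j. j < length (y # zs) \<longrightarrow> P j"
  proof (intro allI impI)
    fix j assume "j < length (y # zs)" then show "P j" using a by (cases "j = 0") auto
  qed
qed

lemma canon_idx: "cs \<noteq> [] \<Longrightarrow> canon act cs \<longleftrightarrow>
  (\<forall>i. Suc i < length cs \<longrightarrow> sless (*) (snd (cs ! i)) (act (fst (cs ! Suc i)) (snd (cs ! Suc i)))) \<and>
  (\<forall>i. 0 < i \<and> i < length cs \<longrightarrow> fst (cs ! i) \<noteq> 1)"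
proof (induction cs rule: induct_list012)
  case (2 x) then show ?case by (cases x) auto
next
  case (3 x y zs)
  obtain t e where x: "x = (t, e)" by (cases x)
  obtain t' e' where y: "y = (t', e')" by (cases y)
  have IH: "canon act (y # zs) \<longleftrightarrow>
    (\<forall>i. Suc i < length (y # zs) \<longrightarrow> sless (*) (snd ((y # zs) ! i)) (act (fst ((y # zs) ! Suc i)) (snd ((y # zs) ! Suc i)))) \<and>
    (\<forall>i. 0 < i \<and> i < length (y # zs) \<longrightarrow> fst ((y # zs) ! i) \<noteq> 1)" using "3.IH"(2) by simp
  have A: "(\<forall>i. Suc i < length (x # y # zs) \<longrightarrow> sless (*) (snd ((x # y # zs) ! i)) (act (fst ((x # y # zs) ! Suc i)) (snd ((x # y # zs) ! Suc i))))
    \<longleftrightarrow> sless (*) e (act t' e') \<and> (\<forall>i. Suc i < length (y # zs) \<longrightarrow> sless (*) (snd ((y # zs) ! i)) (act (fst ((y # zs) ! Suc i)) (snd ((y # zs) ! Suc i))))"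
    unfolding all_Suc_less_Cons using x y by simp
  have B: "(\<forall>i. 0 < i \<and> i < length (x # y # zs) \<longrightarrow> fst ((x # y # zs) ! i) \<noteq> 1)
    \<longleftrightarrow> t' \<noteq> 1 \<and> (\<forall>i. 0 < i \<and> i < length (y # zs) \<longrightarrow> fst ((y # zs) ! i) \<noteq> 1)"
    unfolding P2_Cons P3_Cons using y by simp
  show ?case unfolding A B using IH x y by auto
qed auto

lemma canonical_iff:
  assumes v: "validY act Y cs"
  shows "canonical_form M (pmul act) (pplus act) (pstar act) (HQ act Y) (map hqc cs) \<longleftrightarrow> cs \<noteq> [] \<and> canon act cs"
proof -
  have sH: "set (map hqc cs) \<subseteq> HQ act Y" using v by (auto simp: validY_def hqc_def hq_HQ)
  have 1: "(\<forall>i. Suc i < length (map hqc cs) \<longrightarrow> sless (pmul act) (pstar act (map hqc cs ! i)) (pplus act (map hqc cs ! Suc i)))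
     \<longleftrightarrow> (\<forall>i. Suc i < length cs \<longrightarrow> sless (*) (snd (cs ! i)) (act (fst (cs ! Suc i)) (snd (cs ! Suc i))))"
    by (simp add: hqc_def hq_pstar hq_pplus embX_sless)
  have 2: "(\<forall>i. 0 < i \<and> i < length (map hqc cs) \<longrightarrow> map hqc cs ! i \<notin> pplus act ` M)
     \<longleftrightarrow> (\<forall>i. 0 < i \<and> i < length cs \<longrightarrow> fst (cs ! i) \<noteq> 1)"
  proof -
    have "\<And>i. i < length cs \<Longrightarrow> snd (cs ! i) \<in> Y" using v by (auto simp: validY_def)
    then show ?thesis by (auto simp: hqc_def hq_notE)
  qed
  show ?thesis unfolding canonical_form_def 1 2 using sH canon_idx by auto
qed

lemma Q_canonical: "has_canonical_forms M (pmul act) (pplus act) (pstar act) (HQ act Y)"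
  unfolding has_canonical_forms_def
proof
  fix m assume "m \<in> M"
  then obtain cs where v: "valid act Y cs" "m = pclass act (wordc cs)" using Qrep by blast
  have ne: "cs \<noteq> []" using valid_ne[OF v(1)] .
  have c: "canon act cs" and vy: "validY act Y cs" using v by (simp_all add: valid_def)
  show "\<exists>!hs. canonical_form M (pmul act) (pplus act) (pstar act) (HQ act Y) hs \<and> lprod (pmul act) hs = m"
  proof (rule ex1I[of _ "map hqc cs"])
    show "canonical_form M (pmul act) (pplus act) (pstar act) (HQ act Y) (map hqc cs) \<and> lprod (pmul act) (map hqc cs) = m"
      using canonical_iff[OF vy] ne c v lprod_hqc by simp
  next
    fix hs assume a: "canonical_form M (pmul act) (pplus act) (pstar act) (HQ act Y) hs \<and> lprod (pmul act) hs = m"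
    then have "set hs \<subseteq> HQ act Y" by (simp add: canonical_form_def)
    then obtain ds where d: "validY act Y ds" "hs = map hqc ds" using lift_HQ by blast
    have dne: "ds \<noteq> []" and dc: "canon act ds" using a d canonical_iff[OF d(1)] by simp_all
    have "pclass act (wordc ds) = pclass act (wordc cs)" using a d lprod_hqc dne v by simp
    then have "nfo act (wordc ds) = nfo act (wordc cs)" using pclass_eq_iff wordc_ne dne ne by blast
    moreover obtain t e r where cs: "cs = (t, e) # r" using ne by (cases cs) auto
    moreover obtain t' e' r' where ds: "ds = (t', e') # r'" using dne by (cases ds) auto
    ultimately have "(t', encps ds) = (t, encps cs)" using nfo_word c dc by metis
    then have "encps ds = encps cs" "fst (hd ds) = fst (hd cs)" using cs ds by auto
    then have "ds = cs" using enc_inj[OF dc c] by simp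
    then show "hs = map hqc cs" using d by simp
  qed
qed

lemma Q_proper_basis: "proper_basis M (pmul act) (pplus act) (pstar act) (HQ act Y)"
  unfolding proper_basis_def basis_def using Q_atomic Q_canonical Q_proper by (simp add: Ql_def)

end



theorem mainTheorem18:
  fixes act :: "'t::monoid_mult \<Rightarrow> 'x::comm_monoid_mult \<Rightarrow> 'x"
    and Y :: "'x set" and oneY :: 'x
  assumes X_semilattice: "\<forall>e::'x. e * e = e"
    and act_one: "\<forall>x. act 1 x = x"
    and act_mult: "\<forall>s t x. act (s * t) x = act s (act t x)"
    and act_mono: "\<forall>t e f. sle (*) e f \<longrightarrow> sle (*) (act t e) (act t f)"
    and Y_closed: "\<forall>e\<in>Y. \<forall>f\<in>Y. e * f \<in> Y"
    and oneY_in: "oneY \<in> Y"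
    and oneY_id: "\<forall>e\<in>Y. oneY * e = e"
    and condA: "\<forall>t. \<forall>e\<in>Y. \<forall>f\<in>Y. sle (*) e f \<longrightarrow> act t f \<in> Y \<longrightarrow> act t e \<in> Y"
    and condB: "\<forall>t. \<exists>g\<in>Y. act t g \<in> Y"
  shows "Ql act Y \<subseteq> Pl act
    \<and> (\<forall>a\<in>Ql act Y. \<forall>b\<in>Ql act Y. pmul act a b \<in> Ql act Y)
    \<and> (\<forall>a\<in>Ql act Y. pplus act a \<in> Ql act Y \<and> pstar act a \<in> Ql act Y)
    \<and> is_monoid (Ql act Y) (pmul act) (embX act oneY)
    \<and> star_left_ehresmann (Ql act Y) (pmul act) (embX act oneY) (pplus act) (pstar act)
    \<and> pplus act ` Ql act Y = embX act ` Y
    \<and> proper_basis (Ql act Y) (pmul act) (pplus act) (pstar act) (HQ act Y)"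
proof -
  interpret qlq act Y oneY
  proof
    show "\<And>e::'x. e * e = e" using X_semilattice by blast
    show "\<And>x. act 1 x = x" using act_one by blast
    show "\<And>s t x. act (s * t) x = act s (act t x)" using act_mult by blast
    show "\<And>t e f. e * f = e \<Longrightarrow> act t e * act t f = act t e" using act_mono by (simp add: sle_def)
    show "\<And>e f. e \<in> Y \<Longrightarrow> f \<in> Y \<Longrightarrow> e * f \<in> Y" using Y_closed by blast
    show "oneY \<in> Y" by (rule oneY_in)
    show "\<And>e. e \<in> Y \<Longrightarrow> oneY * e = e" using oneY_id by blast
    show "\<And>t e f. e \<in> Y \<Longrightarrow> f \<in> Y \<Longrightarrow> e * f = e \<Longrightarrow> act t f \<in> Y \<Longrightarrow> act t e \<in> Y"
      using condA by (simp add: sle_def)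
    show "\<And>t. \<exists>g\<in>Y. act t g \<in> Y" using condB by blast
  qed
  have 1: "Ql act Y \<subseteq> Pl act"
  proof
    fix a assume "a \<in> Ql act Y"
    then obtain u where "u \<noteq> []" "a = pclass act u" using Q_ne by blast
    then show "a \<in> Pl act" by (auto simp: Pl_def)
  qed
  have 2: "\<forall>a\<in>Ql act Y. \<forall>b\<in>Ql act Y. pmul act a b \<in> Ql act Y"
    unfolding Ql_def by (auto intro: sg_gen.mul)
  have 3: "\<forall>a\<in>Ql act Y. pplus act a \<in> Ql act Y \<and> pstar act a \<in> Ql act Y"
    using Q_pplus Q_pstar embX_Q by metis
  show ?thesis using 1 2 3 Q_is_monoid Q_star_left_ehresmann pplus_Q Q_proper_basis by blast
qed

end
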